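(* Let $\sigma$ be an $(\alpha,\beta)$-ReLU activation, and consider the covariance sequence $\{\Sigma^{(L)}\}$ and metrics $\mathrm{FSP}_L(\sigma_w^2)$, $\mathrm{GEV}_L(\sigma_w^2)$ defined in the context. Then: 1. If $\sigma_w^2=2/(\alpha^2+\beta^2)$, then either $\lim_{L\to\infty}\mathrm{GEV}_L(\sigma_w^2)=0$ or $\lim_{L\to\infty}\mathrm{FSP}_L(\sigma_w^2)=0$. 2. If $0<\sigma_w^2<2/(\alpha^2+\beta^2)$, then for every $L\ge1$, $\mathrm{FSP}_L(\sigma_w^2)\le\frac{2C}{(\alpha^2+\beta^2)d_0}\left(\frac{\sigma_w^2(\alpha^2+\beta^2)}{2}\right)^L.$
   Context: An activation $\sigma:\mathbb R\to\mathbb R$ is $(\alpha,\beta)$-ReLU if $\sigma(x)=\alpha x$ for $x\ge0$ and $\sigma(x)=\beta x$ for $x<0$, where $\alpha,\beta\ge0$ are not both $0$. Let $\mathcal G=(\mathcal V,\mathcal E)$ be a finite undirected graph with $n$ nodes, adjacency matrix $A$, degree matrix $D=\mathrm{diag}(A\mathbf 1_n)$ with degrees $d_i$, $\tilde A=A+I$, $\tilde D=D+I$, $\hat A=\tilde D^{-1/2}\tilde A\tilde D^{-1/2}$, $\hat L=I-\hat A$. For $H\in\mathbb R^{n\times C}$ with rows $h_i$, $\mathrm{Dir}(H)=\mathrm{tr}(H^\top\hat LH)=\sum_{\{i,j\}\in\mathcal E}\|h_i/\sqrt{1+d_i}-h_j/\sqrt{1+d_j}\|^2$. Let $X\in\mathbb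 R^{n\times d_0}$ be nonzero, $C\ge1$ an integer, $\sigma_w^2>0$. For positive semidefinite $\Sigma$ put $G(\Sigma)=\mathbb E_{h\sim N(\mathbf 0_n,\Sigma)}[\sigma(h)\sigma(h)^\top]$ (entrywise $\sigma$). Define $\Sigma^{(1)}=\frac{\sigma_w^2}{d_0}\hat AXX^\top\hat A$, $\Sigma^{(l+1)}=\sigma_w^2\hat AG(\Sigma^{(l)})\hat A$. With $H\in\mathbb R^{n\times C}$ having i.i.d. columns $N(\mathbf 0_n,\Sigma^{(L)})$: $\mathrm{FSP}_L(\sigma_w^2)=\mathbb E[\|H\|_F^2/\|X\|_F^2]$, $\mathrm{GEV}_L(\sigma_w^2)=\mathbb E[\mathrm{Dir}(H)/\|H\|_F^2]$. *)

theory Defs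
  imports "HOL-Probability.Probability"
begin

definition relu_ab :: "real \<Rightarrow> real \<Rightarrow> real \<Rightarrow> real" where
  "relu_ab \<alpha> \<beta> x = (if x \<ge> 0 then \<alpha> * x else \<beta> * x)"

definition is_adj :: "('n::finite \<Rightarrow> 'n \<Rightarrow> real) \<Rightarrow> bool" where
  "is_adj A \<longleftrightarrow> (\<forall>i j. A i j \<in> {0, 1} \<and> A i j = A j i) \<and> (\<forall>i. A i i = 0)"

definition degree :: "('n::finite \<Rightarrow> 'n \<Rightarrow> real) \<Rightarrow> 'n \<Rightarrow> real" where
  "degree A i = (\<Sum>j\<in>UNIV. A i j)"

text \<open>hat A = tilde D^(-1/2) (A + I) tilde D^(-1/2).\<close>
definition A_hat :: "('n::finite \<Rightarrow> 'n \<Rightarrow> real) \<Rightarrow> 'n \<Rightarrow> 'n \<Rightarrow> real" where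
  "A_hat A i j = (A i j + (if i = j then 1 else 0)) /
                 (sqrt (1 + degree A i) * sqrt (1 + degree A j))"

definition L_hat :: "('n::finite \<Rightarrow> 'n \<Rightarrow> real) \<Rightarrow> 'n \<Rightarrow> 'n \<Rightarrow> real" where
  "L_hat A i j = (if i = j then 1 else 0) - A_hat A i j"

definition mmul :: "('a \<Rightarrow> 'b::finite \<Rightarrow> real) \<Rightarrow> ('b \<Rightarrow> 'c \<Rightarrow> real) \<Rightarrow> 'a \<Rightarrow> 'c \<Rightarrow> real" where
  "mmul M N i j = (\<Sum>k\<in>UNIV. M i k * N k j)"

definition mtrans :: "('a \<Rightarrow> 'b \<Rightarrow> real) \<Rightarrow> 'b \<Rightarrow> 'a \<Rightarrow> real" where
  "mtrans M i j = M j i"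

text \<open>Dirichlet energy Dir(H) = tr(H^T hat L H); H has rows indexed by nodes and
  columns indexed by channels c < C.\<close>
definition dirichlet :: "('n::finite \<Rightarrow> 'n \<Rightarrow> real) \<Rightarrow> nat \<Rightarrow> (nat \<Rightarrow> 'n \<Rightarrow> real) \<Rightarrow> real" where
  "dirichlet A C H = (\<Sum>c<C. \<Sum>i\<in>UNIV. \<Sum>j\<in>UNIV. H c i * L_hat A i j * H c j)"

definition frob2 :: "nat \<Rightarrow> (nat \<Rightarrow> 'n::finite \<Rightarrow> real) \<Rightarrow> real" where
  "frob2 C H = (\<Sum>c<C. \<Sum>i\<in>UNIV. (H c i)\<^sup>2)"

definition frob2X :: "('n::finite \<Rightarrow> 'd::finite \<Rightarrow> real) \<Rightarrow> real" where
  "frob2X X = (\<Sum>i\<in>UNIV. \<Sum>k\<in>UNIV. (X i k)\<^sup>2)"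

text \<open>Standard normal distribution on the reals and the centered multivariate
  normal N(0, Sigma) on 'n => real (Sigma positive semidefinite), realised as the
  law of M z with z standard normal i.i.d. and M M^T = Sigma.\<close>
definition std_normal :: "real measure" where
  "std_normal = density lborel std_normal_density"

definition sqrt_factor :: "('n::finite \<Rightarrow> 'n \<Rightarrow> real) \<Rightarrow> 'n \<Rightarrow> 'n \<Rightarrow> real" where
  "sqrt_factor S = (SOME M. mmul M (mtrans M) = S)"

definition mvnormal :: "('n::finite \<Rightarrow> 'n \<Rightarrow> real) \<Rightarrow> ('n \<Rightarrow> real) measure" where
  "mvnormal S = distr (PiM UNIV (\<lambda>_. std_normal)) (PiM UNIV (\<lambda>_. borel))
                  (\<lambda>z i. \<Sum>k\<in>UNIV. sqrt_factor S i k * z k)"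

definition Gmat :: "(real \<Rightarrow> real) \<Rightarrow> ('n::finite \<Rightarrow> 'n \<Rightarrow> real) \<Rightarrow> 'n \<Rightarrow> 'n \<Rightarrow> real" where
  "Gmat \<sigma> S i j = (\<integral>h. \<sigma> (h i) * \<sigma> (h j) \<partial>mvnormal S)"

text \<open>Covariance sequence: Sigma^(1), Sigma^(l+1); index 0 is unused (zero).\<close>
fun cov :: "(real \<Rightarrow> real) \<Rightarrow> real \<Rightarrow> ('n::finite \<Rightarrow> 'n \<Rightarrow> real) \<Rightarrow> ('n \<Rightarrow> 'd::finite \<Rightarrow> real)
            \<Rightarrow> nat \<Rightarrow> 'n \<Rightarrow> 'n \<Rightarrow> real" where
  "cov \<sigma> sw A X 0 = (\<lambda>i j. 0)"
| "cov \<sigma> sw A X (Suc 0) =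
     (\<lambda>i j. sw / real CARD('d) * mmul (mmul (A_hat A) (mmul X (mtrans X))) (A_hat A) i j)"
| "cov \<sigma> sw A X (Suc (Suc l)) =
     (\<lambda>i j. sw * mmul (mmul (A_hat A) (Gmat \<sigma> (cov \<sigma> sw A X (Suc l)))) (A_hat A) i j)"

definition Hlaw :: "nat \<Rightarrow> ('n::finite \<Rightarrow> 'n \<Rightarrow> real) \<Rightarrow> (nat \<Rightarrow> 'n \<Rightarrow> real) measure" where
  "Hlaw C S = PiM {..<C} (\<lambda>_. mvnormal S)"

definition FSP :: "(real \<Rightarrow> real) \<Rightarrow> nat \<Rightarrow> ('n::finite \<Rightarrow> 'n \<Rightarrow> real) \<Rightarrow> ('n \<Rightarrow> 'd::finite \<Rightarrow> real)
                    \<Rightarrow> nat \<Rightarrow> real \<Rightarrow> real" where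
  "FSP \<sigma> C A X L sw = (\<integral>H. frob2 C H / frob2X X \<partial>Hlaw C (cov \<sigma> sw A X L))"

definition GEV :: "(real \<Rightarrow> real) \<Rightarrow> nat \<Rightarrow> ('n::finite \<Rightarrow> 'n \<Rightarrow> real) \<Rightarrow> ('n \<Rightarrow> 'd::finite \<Rightarrow> real)
                    \<Rightarrow> nat \<Rightarrow> real \<Rightarrow> real" where
  "GEV \<sigma> C A X L sw = (\<integral>H. dirichlet A C H / frob2 C H \<partial>Hlaw C (cov \<sigma> sw A X L))"

end

theory Submission
  imports Defs
begin


definition ipv :: "('n::finite \<Rightarrow> real) \<Rightarrow> ('n \<Rightarrow> real) \<Rightarrow> real" where
  "ipv u w = (\<Sum>i\<in>UNIV. u i * w i)"

definition mv :: "('n::finite \<Rightarrow> 'n \<Rightarrow> real) \<Rightarrow> ('n \<Rightarrow> real) \<Rightarrow> 'n \<Rightarrow> real" where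
  "mv M v = (\<lambda>i. \<Sum>j\<in>UNIV. M i j * v j)"

lemma ipv_comm: "ipv u w = ipv w u" by (simp add: ipv_def mult.commute)
lemma ipv_diff_left: "ipv (\<lambda>i. u i - w i) x = ipv u x - ipv w x"
  by (simp add: ipv_def algebra_simps sum_subtractf)
lemma ipv_diff_right: "ipv x (\<lambda>i. u i - w i) = ipv x u - ipv x w"
  by (simp add: ipv_def algebra_simps sum_subtractf)
lemma ipv_scale_left: "ipv (\<lambda>i. c * u i) x = c * ipv u x"
  by (simp add: ipv_def algebra_simps sum_distrib_left)
lemma ipv_scale_right: "ipv x (\<lambda>i. c * u i) = c * ipv x u"
  by (simp add: ipv_def algebra_simps sum_distrib_left)
lemma ipv_self_nonneg: "ipv u u \<ge> 0"
  by (simp add: ipv_def sum_nonneg)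
lemma mv_diff: "mv M (\<lambda>i. u i - w i) = (\<lambda>i. mv M u i - mv M w i)"
  by (simp add: mv_def algebra_simps sum_subtractf)
lemma mv_scale: "mv M (\<lambda>i. c * u i) = (\<lambda>i. c * mv M u i)"
  by (simp add: mv_def algebra_simps sum_distrib_left)

lemma ipv_mv_sym:
  assumes "\<And>i j. M i j = M j i"
  shows "ipv u (mv M w) = ipv (mv M u) w"
proof -
  have "ipv u (mv M w) = (\<Sum>i\<in>UNIV. \<Sum>j\<in>UNIV. u i * M i j * w j)"
    by (simp add: ipv_def mv_def sum_distrib_left mult.assoc)
  also have "\<dots> = (\<Sum>j\<in>UNIV. \<Sum>i\<in>UNIV. u i * M i j * w j)" by (rule sum.swap)
  also have "\<dots> = (\<Sum>j\<in>UNIV. (\<Sum>i\<in>UNIV. M j i * u i) * w j)"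
    by (simp only: sum_distrib_right, intro sum.cong refl, subst assms, simp add: mult_ac)
  also have "\<dots> = ipv (mv M u) w"
    by (simp add: ipv_def mv_def)
  finally show ?thesis .
qed

definition atl :: "('n::finite \<Rightarrow> 'n \<Rightarrow> real) \<Rightarrow> 'n \<Rightarrow> 'n \<Rightarrow> real" where
  "atl A i j = A i j + (if i = j then 1 else 0)"

definition dt :: "('n::finite \<Rightarrow> 'n \<Rightarrow> real) \<Rightarrow> 'n \<Rightarrow> real" where
  "dt A i = 1 + degree A i"

context
  fixes A :: "'n::finite \<Rightarrow> 'n \<Rightarrow> real"
  assumes adj: "is_adj A"
begin

lemma A_nonneg: "A i j \<ge> 0" using adj unfolding is_adj_def by (metis empty_iff insert_iff order_refl zero_le_one)
lemma A_sym: "A i j = A j i" using adj unfolding is_adj_def by force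
lemma atl_nonneg: "atl A i j \<ge> 0" using A_nonneg by (simp add: atl_def)
lemma atl_sym: "atl A i j = atl A j i" using A_sym by (simp add: atl_def)
lemma atl_diag: "atl A i i = 1" using adj unfolding is_adj_def atl_def by force
lemma atl_rowsum: "(\<Sum>j\<in>UNIV. atl A i j) = dt A i"
  by (simp add: atl_def dt_def degree_def sum.distrib)
lemma dt_ge1: "dt A i \<ge> 1"
  unfolding dt_def degree_def using A_nonneg by (simp add: sum_nonneg)
lemma dt_pos: "dt A i > 0" using dt_ge1[of i] by simp
lemma Ahat_eq: "A_hat A i j = atl A i j / (sqrt (dt A i) * sqrt (dt A j))"
  by (simp add: A_hat_def atl_def dt_def)
lemma Ahatl_sym: "A_hat A i j = A_hat A j i"
  by (simp add: Ahat_eq atl_sym mult_ac)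

definition uu :: "('n \<Rightarrow> real) \<Rightarrow> 'n \<Rightarrow> real" where
  "uu v i = v i / sqrt (dt A i)"

lemma v_eq: "v i = sqrt (dt A i) * uu v i"
  using dt_pos[of i] by (simp add: uu_def)

lemma mv_Ahat: "mv (A_hat A) v i = (\<Sum>j\<in>UNIV. atl A i j * uu v j) / sqrt (dt A i)"
  by (simp add: mv_def Ahat_eq uu_def sum_divide_distrib mult_ac)

lemma Q1: "ipv v (mv (A_hat A) v) = (\<Sum>i\<in>UNIV. \<Sum>j\<in>UNIV. atl A i j * uu v i * uu v j)"
proof -
  have "v i * ((\<Sum>j\<in>UNIV. atl A i j * uu v j) / sqrt (dt A i)) = uu v i * (\<Sum>j\<in>UNIV. atl A i j * uu v j)" for i
    using dt_pos[of i] by (subst v_eq[of v]) simp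
  then show ?thesis unfolding ipv_def mv_Ahat by (simp add: sum_distrib_left mult_ac)
qed

lemma Q0: "ipv v v = (\<Sum>i\<in>UNIV. \<Sum>j\<in>UNIV. atl A i j * (uu v i)\<^sup>2)"
proof -
  have "ipv v v = (\<Sum>i\<in>UNIV. dt A i * (uu v i)\<^sup>2)"
    unfolding ipv_def
    apply (rule sum.cong[OF refl])
    apply (subst (1 2) v_eq[of v])
    using dt_pos by (simp add: power2_eq_square algebra_simps abs_of_pos)
  also have "\<dots> = (\<Sum>i\<in>UNIV. \<Sum>j\<in>UNIV. atl A i j * (uu v i)\<^sup>2)"
    by (simp add: atl_rowsum[symmetric] sum_distrib_right)
  finally show ?thesis .
qed

lemma Q0': "ipv v v = (\<Sum>i\<in>UNIV. \<Sum>j\<in>UNIV. atl A i j * (uu v j)\<^sup>2)"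
  unfolding Q0 by (subst sum.swap) (simp add: atl_sym)

lemma P0: "ipv v (mv (A_hat A) v) \<le> ipv v v"
proof -
  have "2 * (ipv v v - ipv v (mv (A_hat A) v)) =
      (\<Sum>i\<in>UNIV. \<Sum>j\<in>UNIV. atl A i j * (uu v i - uu v j)\<^sup>2)"
  proof -
    have "(\<Sum>i\<in>UNIV. \<Sum>j\<in>UNIV. atl A i j * (uu v i - uu v j)\<^sup>2) =
      (\<Sum>i\<in>UNIV. \<Sum>j\<in>UNIV. atl A i j * (uu v i)\<^sup>2) - 2 * (\<Sum>i\<in>UNIV. \<Sum>j\<in>UNIV. atl A i j * uu v i * uu v j)
       + (\<Sum>i\<in>UNIV. \<Sum>j\<in>UNIV. atl A i j * (uu v j)\<^sup>2)"
      by (simp add: power2_eq_square algebra_simps sum.distrib sum_subtractf sum_distrib_left)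
    then show ?thesis using Q0[of v] Q0'[of v] Q1[of v] by argo
  qed
  moreover have "(\<Sum>i\<in>UNIV. \<Sum>j\<in>UNIV. atl A i j * (uu v i - uu v j)\<^sup>2) \<ge> 0"
    by (intro sum_nonneg mult_nonneg_nonneg atl_nonneg) simp
  ultimately show ?thesis by argo
qed

definition TT :: real where "TT = (\<Sum>i\<in>UNIV. dt A i)"
definition del :: real where "del = 2 / TT"

lemma dt_le_TT: "dt A i \<le> TT"
  unfolding TT_def by (rule member_le_sum) (use dt_pos in \<open>auto intro: less_imp_le\<close>)
lemma TT_pos: "TT > 0" using dt_le_TT[of undefined] dt_pos[of undefined] by linarith
lemma del_pos: "del > 0" using TT_pos by (simp add: del_def)

lemma P1: "ipv v (mv (A_hat A) v) \<ge> (del - 1) * ipv v v"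
proof -
  have "2 * (ipv v v + ipv v (mv (A_hat A) v)) =
      (\<Sum>i\<in>UNIV. \<Sum>j\<in>UNIV. atl A i j * (uu v i + uu v j)\<^sup>2)"
  proof -
    have "(\<Sum>i\<in>UNIV. \<Sum>j\<in>UNIV. atl A i j * (uu v i + uu v j)\<^sup>2) =
      (\<Sum>i\<in>UNIV. \<Sum>j\<in>UNIV. atl A i j * (uu v i)\<^sup>2) + 2 * (\<Sum>i\<in>UNIV. \<Sum>j\<in>UNIV. atl A i j * uu v i * uu v j)
       + (\<Sum>i\<in>UNIV. \<Sum>j\<in>UNIV. atl A i j * (uu v j)\<^sup>2)"
      by (simp add: power2_eq_square algebra_simps sum.distrib sum_subtractf sum_distrib_left)
    then show ?thesis using Q0[of v] Q0'[of v] Q1[of v] by argo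
  qed
  also have "\<dots> \<ge> (\<Sum>i\<in>UNIV. atl A i i * (uu v i + uu v i)\<^sup>2)"
    apply (rule sum_mono)
    apply (rule member_le_sum[where f="\<lambda>j. atl A _ j * (uu v _ + uu v j)\<^sup>2"])
    using atl_nonneg by auto
  finally have 1: "2 * (ipv v v + ipv v (mv (A_hat A) v)) \<ge> 4 * (\<Sum>i\<in>UNIV. (uu v i)\<^sup>2)"
    by (simp add: atl_diag power2_eq_square sum_distrib_left algebra_simps)
  have "ipv v v = (\<Sum>i\<in>UNIV. dt A i * (uu v i)\<^sup>2)"
    unfolding ipv_def
    apply (rule sum.cong[OF refl])
    apply (subst (1 2) v_eq[of v])
    using dt_pos by (simp add: power2_eq_square algebra_simps abs_of_pos)
  also have "\<dots> \<le> (\<Sum>i\<in>UNIV. TT * (uu v i)\<^sup>2)"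
    by (intro sum_mono mult_right_mono dt_le_TT) simp
  finally have 2: "ipv v v \<le> TT * (\<Sum>i\<in>UNIV. (uu v i)\<^sup>2)" by (simp add: sum_distrib_left)
  have "del * ipv v v \<le> del * (TT * (\<Sum>i\<in>UNIV. (uu v i)\<^sup>2))"
    using 2 del_pos by (intro mult_left_mono) auto
  also have "\<dots> = 2 * (\<Sum>i\<in>UNIV. (uu v i)\<^sup>2)" using TT_pos by (simp add: del_def)
  finally show ?thesis using 1 by (simp add: algebra_simps)
qed

lemma V1: "ipv (mv (A_hat A) v) (mv (A_hat A) v) \<le> ipv v v"
proof -
  have "ipv (mv (A_hat A) v) (mv (A_hat A) v) = (\<Sum>i\<in>UNIV. (\<Sum>j\<in>UNIV. atl A i j * uu v j)\<^sup>2 / dt A i)"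
    unfolding ipv_def mv_Ahat using dt_pos by (simp add: power2_eq_square abs_of_pos)
  also have "\<dots> \<le> (\<Sum>i\<in>UNIV. \<Sum>j\<in>UNIV. atl A i j * (uu v j)\<^sup>2)"
  proof (rule sum_mono)
    fix i
    have "(\<Sum>j\<in>UNIV. atl A i j * uu v j)\<^sup>2 =
        (\<Sum>j\<in>UNIV. sqrt (atl A i j) * (sqrt (atl A i j) * uu v j))\<^sup>2"
      using atl_nonneg by (simp add: mult.assoc[symmetric])
    also have "\<dots> \<le> (\<Sum>j\<in>UNIV. (sqrt (atl A i j))\<^sup>2) * (\<Sum>j\<in>UNIV. (sqrt (atl A i j) * uu v j)\<^sup>2)"
      by (rule Cauchy_Schwarz_ineq_sum)
    also have "\<dots> = dt A i * (\<Sum>j\<in>UNIV. atl A i j * (uu v j)\<^sup>2)"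
      using atl_nonneg by (simp add: atl_rowsum power_mult_distrib)
    finally show "(\<Sum>j\<in>UNIV. atl A i j * uu v j)\<^sup>2 / dt A i \<le> (\<Sum>j\<in>UNIV. atl A i j * (uu v j)\<^sup>2)"
      using dt_pos[of i] by (simp add: divide_le_eq mult.commute)
  qed
  also have "\<dots> = ipv v v" by (rule Q0'[symmetric])
  finally show ?thesis .
qed


definition pv :: "('n \<Rightarrow> real) \<Rightarrow> 'n \<Rightarrow> real" where
  "pv w = (\<lambda>i. w i - mv (A_hat A) w i)"

lemma pv_nonneg: "ipv w (pv w) \<ge> 0"
  using P0[of w] by (simp add: pv_def ipv_diff_right)

lemma pv_upper: "ipv w (pv w) \<le> (2 - del) * ipv w w"
  using P1[of w] by (simp add: pv_def ipv_diff_right algebra_simps)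

lemma pv_sym: "ipv u (pv w) = ipv (pv u) w"
  using ipv_mv_sym[of "A_hat A" u w, OF Ahatl_sym]
  by (simp add: pv_def ipv_diff_right ipv_diff_left ipv_comm)

lemma pv_diff: "pv (\<lambda>i. u i - w i) = (\<lambda>i. pv u i - pv w i)"
  by (simp add: pv_def mv_diff algebra_simps)
lemma pv_scale: "pv (\<lambda>i. c * u i) = (\<lambda>i. c * pv u i)"
  by (simp add: pv_def mv_scale algebra_simps)

definition cc :: real where "cc = del + 2 * (1 / (2 * del)) + (1 / (2 * del)) * del"

lemma cc_pos: "cc > 0" using del_pos by (simp add: cc_def add_pos_pos)

lemma V2: "ipv (mv (A_hat A) s) (pv (mv (A_hat A) s))
    \<le> cc * (ipv s s - ipv (mv (A_hat A) s) (mv (A_hat A) s))"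
proof -
  define p1 where "p1 = pv s"
  define p2 where "p2 = pv p1"
  define a1 where "a1 = ipv s p1"
  define a2 where "a2 = ipv p1 p1"
  define a3 where "a3 = ipv p1 p2"
  have As: "mv (A_hat A) s = (\<lambda>i. s i - p1 i)" by (simp add: p1_def pv_def)
  have sp2: "ipv s p2 = a2" unfolding p2_def a2_def p1_def by (rule pv_sym)
  have L: "ipv (mv (A_hat A) s) (pv (mv (A_hat A) s)) = a1 - 2 * a2 + a3"
    unfolding As pv_diff p2_def[symmetric] p1_def[symmetric]
    using sp2 by (simp add: ipv_diff_left ipv_diff_right a1_def a2_def a3_def ipv_comm[of p1 s] p2_def)
  have R: "ipv s s - ipv (mv (A_hat A) s) (mv (A_hat A) s) = 2 * a1 - a2"
    unfolding As by (simp add: ipv_diff_left ipv_diff_right a1_def a2_def ipv_comm[of p1 s])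
  have f1: "a1 \<ge> 0" unfolding a1_def p1_def by (rule pv_nonneg)
  have f2: "a3 \<le> (2 - del) * a2" unfolding a3_def a2_def p2_def by (rule pv_upper)
  have f3: "a3 - 4 * a2 + 4 * a1 \<ge> 0"
  proof -
    have "ipv (\<lambda>i. p1 i - 2 * s i) (pv (\<lambda>i. p1 i - 2 * s i)) \<ge> 0" by (rule pv_nonneg)
    moreover have "ipv (\<lambda>i. p1 i - 2 * s i) (pv (\<lambda>i. p1 i - 2 * s i)) = a3 - 4 * a2 + 4 * a1"
      using sp2 unfolding pv_diff pv_scale p2_def[symmetric] p1_def[symmetric]
      by (simp add: ipv_diff_left ipv_diff_right ipv_scale_left ipv_scale_right a1_def a2_def a3_def
          ipv_comm[of p1 s] p2_def)
    ultimately show ?thesis by argo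
  qed
  define B where "B = 1 / (2 * del)"
  have Bd: "B * del = 1/2" using del_pos by (simp add: B_def)
  have B0: "B \<ge> 0" using del_pos by (simp add: B_def)
  have ccB: "cc = del + 2 * B + B * del" by (simp add: cc_def B_def)
  have key: "cc * (2 * a1 - a2) - (a1 - 2 * a2 + a3) =
      (1 + B) * ((2 - del) * a2 - a3) + B * (a3 - 4 * a2 + 4 * a1) + 2 * del * a1"
    unfolding ccB using Bd by (simp add: algebra_simps)
  have "(1 + B) * ((2 - del) * a2 - a3) + B * (a3 - 4 * a2 + 4 * a1) + 2 * del * a1 \<ge> 0"
  proof -
    have "(1 + B) * ((2 - del) * a2 - a3) \<ge> 0" using f2 B0 by simp
    moreover have "B * (a3 - 4 * a2 + 4 * a1) \<ge> 0" using f3 B0 by simp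
    moreover have "2 * del * a1 \<ge> 0" using f1 del_pos by simp
    ultimately show ?thesis by argo
  qed
  then show ?thesis unfolding L R using key by argo
qed
end


definition qf :: "'n set \<Rightarrow> ('n \<Rightarrow> 'n \<Rightarrow> real) \<Rightarrow> ('n \<Rightarrow> real) \<Rightarrow> real" where
  "qf F S v = (\<Sum>i\<in>F. \<Sum>j\<in>F. v i * S i j * v j)"

lemma sum_delta_mult:
  fixes f :: "'a \<Rightarrow> real"
  assumes "finite F" "a \<in> F"
  shows "(\<Sum>k\<in>F. f k * (if k = a then x else 0)) = f a * x"
proof -
  have "(\<Sum>k\<in>F. f k * (if k = a then x else 0)) = (\<Sum>k\<in>F. if k = a then f a * x else 0)"
    by (rule sum.cong) auto
  also have "\<dots> = f a * x" using assms by simp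
  finally show ?thesis .
qed

lemma qf_two:
  assumes "finite F" "a \<in> F" "j \<in> F" "a \<noteq> j" "\<And>i k. S i k = S k i"
  shows "qf F S (\<lambda>i. (if i = a then x else 0) + (if i = j then y else 0))
       = x\<^sup>2 * S a a + 2 * x * y * S a j + y\<^sup>2 * S j j"
proof -
  define v where "v i = (if i = a then x else 0) + (if i = j then y else 0)" for i
  have inner: "(\<Sum>k\<in>F. v i * S i k * v k) = v i * (S i a * x + S i j * y)" for i
  proof -
    have "(\<Sum>k\<in>F. v i * S i k * v k) = v i * ((\<Sum>k\<in>F. S i k * (if k = a then x else 0)) +
       (\<Sum>k\<in>F. S i k * (if k = j then y else 0)))"
      by (simp add: v_def sum_distrib_left sum.distrib algebra_simps)
    also have "\<dots> = v i * (S i a * x + S i j * y)"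
      using assms by (simp add: sum_delta_mult)
    finally show ?thesis .
  qed
  have "qf F S v = (\<Sum>i\<in>F. (S i a * x + S i j * y) * (if i = a then x else 0)) +
      (\<Sum>i\<in>F. (S i a * x + S i j * y) * (if i = j then y else 0))"
    unfolding qf_def inner by (simp add: v_def sum.distrib algebra_simps)
  also have "(\<Sum>i\<in>F. (S i a * x + S i j * y) * (if i = a then x else 0)) = (S a a * x + S a j * y) * x"
    by (rule sum_delta_mult[where f="\<lambda>i. S i a * x + S i j * y"]) (use assms in auto)
  also have "(\<Sum>i\<in>F. (S i a * x + S i j * y) * (if i = j then y else 0)) = (S j a * x + S j j * y) * y"
    by (rule sum_delta_mult[where f="\<lambda>i. S i a * x + S i j * y"]) (use assms in auto)
  also have "(S a a * x + S a j * y) * x + (S j a * x + S j j * y) * y = x\<^sup>2 * S a a + 2 * x * y * S a j + y\<^sup>2 * S j j"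
    using assms(5)[of j a] by (simp add: power2_eq_square algebra_simps)
  finally show ?thesis unfolding v_def .
qed

lemma qf_insert:
  assumes "finite F" "a \<notin> F" "\<And>i k. S i k = S k i"
  shows "qf (insert a F) S v = (v a)\<^sup>2 * S a a + 2 * v a * (\<Sum>k\<in>F. S a k * v k) + qf F S v"
proof -
  have "qf (insert a F) S v = v a * S a a * v a + (\<Sum>k\<in>F. v a * S a k * v k)
      + (\<Sum>i\<in>F. v i * S i a * v a) + qf F S v"
    using assms by (simp add: qf_def sum.distrib algebra_simps)
  also have "(\<Sum>i\<in>F. v i * S i a * v a) = (\<Sum>k\<in>F. v a * S a k * v k)"
    by (rule sum.cong[OF refl]) (simp add: assms(3)[of _ a] mult_ac)
  finally show ?thesis
    by (simp add: power2_eq_square sum_distrib_left mult_ac)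
qed

lemma qf_cong: "(\<And>i. i \<in> F \<Longrightarrow> v i = w i) \<Longrightarrow> qf F S v = qf F S w"
  by (simp add: qf_def)

lemma chol_set:
  assumes "finite F"
  shows "\<forall>S::'n \<Rightarrow> 'n \<Rightarrow> real. (\<forall>i j. S i j = S j i) \<and> (\<forall>v. qf F S v \<ge> 0) \<longrightarrow>
      (\<exists>M. \<forall>i\<in>F. \<forall>j\<in>F. (\<Sum>k\<in>F. M i k * M j k) = S i j)"
  using assms
proof (induction F rule: finite_induct)
  case empty
  then show ?case by simp
next
  case (insert a F)
  show ?case
  proof (intro allI impI)
    fix S :: "'n \<Rightarrow> 'n \<Rightarrow> real"
    assume H: "(\<forall>i j. S i j = S j i) \<and> (\<forall>v. qf (insert a F) S v \<ge> 0)"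
    have sym: "\<And>i j. S i j = S j i" using H by blast
    have psd: "\<And>v. qf (insert a F) S v \<ge> 0" using H by blast
    have QI: "\<And>v. qf (insert a F) S v = (v a)\<^sup>2 * S a a + 2 * v a * (\<Sum>k\<in>F. S a k * v k) + qf F S v"
      by (rule qf_insert) (use insert sym in auto)
    have saa: "S a a \<ge> 0"
    proof -
      have "qf F S (\<lambda>i. if i = a then 1 else 0) = qf F S (\<lambda>i. 0)"
        using insert by (intro qf_cong) auto
      moreover have "(\<Sum>k\<in>F. S a k * (if k = a then 1 else 0)) = 0"
        using insert by (intro sum.neutral) auto
      ultimately have "qf (insert a F) S (\<lambda>i. if i = a then 1 else 0) = S a a"
        unfolding QI by (simp add: qf_def)
      then show ?thesis using psd by metis
    qed
    show "\<exists>M. \<forall>i\<in>insert a F. \<forall>j\<in>insert a F. (\<Sum>k\<in>insert a F. M i k * M j k) = S i j"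
    proof (cases "S a a = 0")
      case True
      have zero: "S a j = 0" if "j \<in> F" for j
      proof (rule ccontr)
        assume ne: "S a j \<noteq> 0"
        define t where "t = - (S j j + 1) / (2 * S a j)"
        have "qf (insert a F) S (\<lambda>i. (if i = a then t else 0) + (if i = j then 1 else 0))
            = t\<^sup>2 * S a a + 2 * t * 1 * S a j + 1\<^sup>2 * S j j"
          by (rule qf_two) (use insert that sym in auto)
        also have "\<dots> = -1" using True ne by (simp add: t_def field_simps)
        finally show False using psd by (metis neg_0_le_iff_le not_one_le_zero)
      qed
      have psdF: "qf F S v \<ge> 0" for v
      proof -
        have "qf (insert a F) S (\<lambda>i. if i = a then 0 else v i) = qf F S v"
          unfolding QI using insert by (auto intro!: qf_cong)
        then show ?thesis using psd by metis
      qed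
      obtain M' where M': "\<forall>i\<in>F. \<forall>j\<in>F. (\<Sum>k\<in>F. M' i k * M' j k) = S i j"
        using insert.IH sym psdF by blast
      define M where "M i k = (if i = a \<or> k = a then 0 else M' i k)" for i k
      have "(\<Sum>k\<in>insert a F. M i k * M j k) = S i j" if "i \<in> insert a F" "j \<in> insert a F" for i j
      proof -
        have "(\<Sum>k\<in>insert a F. M i k * M j k) = (\<Sum>k\<in>F. M i k * M j k)"
          using insert by (simp add: M_def)
        also have "\<dots> = (if i = a \<or> j = a then 0 else (\<Sum>k\<in>F. M' i k * M' j k))"
          using insert by (auto simp: M_def intro!: sum.cong)
        also have "\<dots> = S i j"
        proof -
          have z2: "S j a = 0" if "j \<in> F" for j using zero[OF that] sym[of j a] by simp
          show ?thesis
          proof (cases "i = a \<or> j = a")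
            case True
            then show ?thesis using that zero z2 \<open>S a a = 0\<close> by (cases "i = a"; cases "j = a") auto
          next
            case False
            then show ?thesis using that M' by simp
          qed
        qed
        finally show ?thesis .
      qed
      then show ?thesis by blast
    next
      case False
      then have spos: "S a a > 0" using saa by simp
      define S' where "S' i j = S i j - S i a * S a j / S a a" for i j
      have sym': "S' i j = S' j i" for i j unfolding S'_def using sym by (simp add: mult.commute)
      have psd': "qf F S' v \<ge> 0" for v
      proof -
        define b where "b = (\<Sum>k\<in>F. S a k * v k)"
        define w where "w i = (if i = a then - b / S a a else v i)" for i
        have wF: "qf F S w = qf F S v" using insert by (auto intro!: qf_cong simp: w_def)
        have bw: "(\<Sum>k\<in>F. S a k * w k) = b" unfolding b_def using insert
          by (auto intro!: sum.cong simp: w_def)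
        have "qf (insert a F) S w = (w a)\<^sup>2 * S a a + 2 * w a * b + qf F S v"
          unfolding QI wF bw ..
        also have "\<dots> = qf F S v - b\<^sup>2 / S a a"
          using spos by (simp add: w_def power2_eq_square field_simps)
        finally have 1: "qf (insert a F) S w = qf F S v - b\<^sup>2 / S a a" .
        have 2: "qf F S' v = qf F S v - b\<^sup>2 / S a a"
        proof -
          have pt: "v i * S' i j * v j = v i * S i j * v j - ((v i * S a i) * (S a j * v j)) / S a a" for i j
            unfolding S'_def using sym[of i a] by (simp add: algebra_simps diff_divide_distrib)
          have "qf F S' v = qf F S v - (\<Sum>i\<in>F. \<Sum>j\<in>F. (v i * S a i) * (S a j * v j)) / S a a"
            unfolding qf_def pt by (simp only: sum_subtractf sum_divide_distrib)
          also have "(\<Sum>i\<in>F. \<Sum>j\<in>F. (v i * S a i) * (S a j * v j)) = b\<^sup>2"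
            unfolding b_def power2_eq_square sum_product by (simp add: mult_ac)
          finally show ?thesis .
        qed
        show ?thesis using psd[of w] 1 2 by simp
      qed
      obtain M' where M': "\<forall>i\<in>F. \<forall>j\<in>F. (\<Sum>k\<in>F. M' i k * M' j k) = S' i j"
        using insert.IH sym' psd' by blast
      define M where "M i k = (if k = a then S i a / sqrt (S a a) else if i = a then 0 else M' i k)" for i k
      have "(\<Sum>k\<in>insert a F. M i k * M j k) = S i j" if "i \<in> insert a F" "j \<in> insert a F" for i j
      proof -
        have "(\<Sum>k\<in>insert a F. M i k * M j k) = M i a * M j a + (\<Sum>k\<in>F. M i k * M j k)"
          using insert by (simp add: sum.insert)
        also have "M i a * M j a = S i a * S j a / S a a"
          using spos by (simp add: M_def)
        also have "(\<Sum>k\<in>F. M i k * M j k) = (if i = a \<or> j = a then 0 else (\<Sum>k\<in>F. M' i k * M' j k))"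
          using insert by (cases "i = a \<or> j = a") (auto simp: M_def intro!: sum.cong sum.neutral)
        also have "S i a * S j a / S a a + \<dots> = S i j"
        proof (cases "i = a")
          case True
          then show ?thesis using spos sym[of a j] by simp
        next
          case False
          then have iF: "i \<in> F" using that by simp
          show ?thesis
          proof (cases "j = a")
            case True
            then show ?thesis using spos False by simp
          next
            case False
            then have jF: "j \<in> F" using that by simp
            have "(\<Sum>k\<in>F. M' i k * M' j k) = S' i j" using M' iF jF by blast
            then show ?thesis using \<open>i \<noteq> a\<close> False sym[of j a] by (simp add: S'_def)
          qed
        qed
        finally show ?thesis .
      qed
      then show ?thesis by blast
    qed
  qed
qed

lemma sqrt_factor_ok:
  fixes S :: "'n::finite \<Rightarrow> 'n \<Rightarrow> real"
  assumes "\<And>i j. S i j = S j i" "\<And>v. qf UNIV S v \<ge> 0"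
  shows "mmul (sqrt_factor S) (mtrans (sqrt_factor S)) = S"
proof -
  have "(\<forall>i j. S i j = S j i) \<and> (\<forall>v. qf UNIV S v \<ge> 0)" using assms by blast
  then obtain M :: "'n \<Rightarrow> 'n \<Rightarrow> real" where "\<forall>i\<in>UNIV. \<forall>j\<in>UNIV. (\<Sum>k\<in>UNIV. M i k * M j k) = S i j"
    using chol_set[of "UNIV::'n set", OF finite_class.finite_UNIV, THEN spec[of _ S], THEN mp] by blast
  then have "\<exists>M::'n \<Rightarrow> 'n \<Rightarrow> real. mmul M (mtrans M) = S"
    by (intro exI[of _ M] ext) (auto simp: mmul_def mtrans_def)
  then show ?thesis unfolding sqrt_factor_def by (rule someI_ex)
qed


definition ZZ :: "('n::finite \<Rightarrow> real) measure" where
  "ZZ = PiM UNIV (\<lambda>_. std_normal)"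

definition lin :: "('n::finite \<Rightarrow> real) \<Rightarrow> ('n \<Rightarrow> real) \<Rightarrow> real" where
  "lin m z = (\<Sum>k\<in>UNIV. m k * z k)"

lemma ps_std: "prob_space std_normal"
  unfolding std_normal_def using prob_space_normal_density[of 1 0] by simp

lemma sets_std: "sets std_normal = sets borel"
  by (simp add: std_normal_def)

lemma ps_Z: "prob_space (ZZ :: ('n::finite \<Rightarrow> real) measure)"
  unfolding ZZ_def by (rule prob_space_PiM) (rule ps_std)

lemma space_Z: "space (ZZ :: ('n::finite \<Rightarrow> real) measure) = UNIV"
  by (simp add: ZZ_def space_PiM std_normal_def)

lemma sets_Z: "sets (ZZ :: ('n::finite \<Rightarrow> real) measure) = sets (PiM UNIV (\<lambda>_. borel))"
  unfolding ZZ_def by (rule sets_PiM_cong) (auto simp: sets_std)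

lemma meas_Z_cong: "measurable (ZZ :: ('n::finite \<Rightarrow> real) measure) N = measurable (PiM UNIV (\<lambda>_. borel)) N"
  by (rule measurable_cong_sets[OF sets_Z refl])

lemma lin_meas[measurable]: "lin m \<in> borel_measurable (PiM UNIV (\<lambda>_. borel))"
  unfolding lin_def by measurable

lemma lin_meas_Z[measurable]: "lin m \<in> borel_measurable ZZ"
  unfolding meas_Z_cong by (rule lin_meas)

lemma coord_distr: "distr (ZZ :: ('n::finite \<Rightarrow> real) measure) borel (\<lambda>z. z k) = std_normal"
proof -
  have "distr (ZZ :: ('n::finite \<Rightarrow> real) measure) borel (\<lambda>z. z k) = distr ZZ std_normal (\<lambda>z. z k)"
    by (rule distr_cong) (auto simp: sets_std)
  also have "\<dots> = std_normal" unfolding ZZ_def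
    by (rule distr_PiM_component) (auto intro: ps_std)
  finally show ?thesis .
qed

lemma coord_distributed: "distributed (ZZ :: ('n::finite \<Rightarrow> real) measure) lborel (\<lambda>z. z k) std_normal_density"
proof -
  have "distr (ZZ :: ('n::finite \<Rightarrow> real) measure) lborel (\<lambda>z. z k) = distr ZZ borel (\<lambda>z. z k)"
    by (rule distr_cong) auto
  also have "\<dots> = density lborel std_normal_density" by (simp add: coord_distr std_normal_def)
  finally show ?thesis unfolding distributed_def by (simp add: meas_Z_cong)
qed

lemma indep_coord: "prob_space.indep_vars (ZZ :: ('n::finite \<Rightarrow> real) measure) (\<lambda>_. borel) (\<lambda>k z. z k) UNIV"
proof -
  interpret prob_space "ZZ :: ('n::finite \<Rightarrow> real) measure" by (rule ps_Z)
  have "distr ZZ (PiM UNIV (\<lambda>_. borel)) (\<lambda>x. \<lambda>i\<in>UNIV. x i) = (ZZ :: ('n::finite \<Rightarrow> real) measure)"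
  proof -
    have "distr ZZ (PiM UNIV (\<lambda>_. borel)) (\<lambda>x. \<lambda>i\<in>UNIV. x i) = distr ZZ ZZ (\<lambda>x. x)"
      by (rule distr_cong) (auto simp: sets_Z)
    also have "\<dots> = ZZ" by (rule distr_id)
    finally show ?thesis .
  qed
  also have "(ZZ :: ('n::finite \<Rightarrow> real) measure) = PiM UNIV (\<lambda>i. distr ZZ borel (\<lambda>z. z i))"
  proof -
    have "(\<lambda>i. distr (ZZ :: ('n::finite \<Rightarrow> real) measure) borel (\<lambda>z. z i)) = (\<lambda>_. std_normal)"
      by (simp add: coord_distr)
    then show ?thesis by (simp add: ZZ_def)
  qed
  finally show ?thesis
    by (subst indep_vars_iff_distr_eq_PiM) (auto simp: meas_Z_cong)
qed

lemma lin_distributed: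
  assumes "\<exists>k. m k \<noteq> 0"
  shows "distributed (ZZ :: ('n::finite \<Rightarrow> real) measure) lborel (lin m)
           (normal_density 0 (sqrt (\<Sum>k\<in>UNIV. (m k)\<^sup>2)))"
proof -
  interpret prob_space "ZZ :: ('n::finite \<Rightarrow> real) measure" by (rule ps_Z)
  define I where "I = {k. m k \<noteq> 0}"
  have I: "finite I" "I \<noteq> {}" using assms by (auto simp: I_def fun_eq_iff)
  have indep: "indep_vars (\<lambda>_. borel) (\<lambda>k. (\<lambda>x. m k * x) \<circ> (\<lambda>z. z k)) UNIV"
    by (rule indep_vars_compose[OF indep_coord]) auto
  have indepI: "indep_vars (\<lambda>_. borel) (\<lambda>k z. m k * z k) I"
    using indep_vars_subset[OF indep, of I] by (simp add: o_def)
  have nd: "distributed ZZ lborel (\<lambda>z. m k * z k) (normal_density 0 \<bar>m k\<bar>)" if "k \<in> I" for k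
    using normal_density_affine[OF coord_distributed[of k], where \<alpha>="m k" and \<beta>=0] that
    by (simp add: I_def)
  have "distributed ZZ lborel (\<lambda>z. \<Sum>k\<in>I. m k * z k)
       (normal_density (\<Sum>k\<in>I. 0) (sqrt (\<Sum>k\<in>I. \<bar>m k\<bar>\<^sup>2)))"
    by (rule sum_indep_normal[OF I indepI]) (auto simp: I_def intro: nd)
  moreover have "(\<lambda>z. \<Sum>k\<in>I. m k * z k) = lin m"
    unfolding lin_def by (intro ext sum.mono_neutral_left) (auto simp: I_def)
  moreover have "(\<Sum>k\<in>I. \<bar>m k\<bar>\<^sup>2) = (\<Sum>k\<in>UNIV. (m k)\<^sup>2)"
    unfolding power2_abs by (intro sum.mono_neutral_left) (auto simp: I_def)
  ultimately show ?thesis by simp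
qed


lemma lin_zero: "(\<forall>k. m k = 0) \<Longrightarrow> lin m z = 0"
  by (simp add: lin_def)

lemma lin_sq:
  "integrable (ZZ :: ('n::finite \<Rightarrow> real) measure) (\<lambda>z. (lin m z)\<^sup>2) \<and>
   (\<integral>z. (lin m z)\<^sup>2 \<partial>(ZZ :: ('n::finite \<Rightarrow> real) measure)) = (\<Sum>k\<in>UNIV. (m k)\<^sup>2)"
proof (cases "\<exists>k. m k \<noteq> 0")
  case False
  then show ?thesis by (simp add: lin_zero)
next
  case True
  define s where "s = sqrt (\<Sum>k\<in>UNIV. (m k)\<^sup>2)"
  have "(\<Sum>k\<in>UNIV. (m k)\<^sup>2) > 0"
    using True by (metis (mono_tags) UNIV_I finite sum_pos2 power2_less_0 not_less zero_less_power2)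
  then have s: "s > 0" "s\<^sup>2 = (\<Sum>k\<in>UNIV. (m k)\<^sup>2)" by (auto simp: s_def)
  have D: "distributed (ZZ :: ('n::finite \<Rightarrow> real) measure) lborel (lin m) (normal_density 0 s)"
    unfolding s_def by (rule lin_distributed[OF True])
  have "integrable lborel (\<lambda>x. normal_density 0 s x * x\<^sup>2)"
    using integrable_normal_moment[of s 0 2] s by simp
  then have I: "integrable (ZZ :: ('n::finite \<Rightarrow> real) measure) (\<lambda>z. (lin m z)\<^sup>2)"
    using distributed_integrable[OF D, of "\<lambda>x. x\<^sup>2"] by simp
  have "(\<integral>z. (lin m z)\<^sup>2 \<partial>(ZZ :: ('n::finite \<Rightarrow> real) measure)) = (\<integral>x. normal_density 0 s x * x\<^sup>2 \<partial>lborel)"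
    using distributed_integral[OF D, of "\<lambda>x. x\<^sup>2"] by simp
  also have "\<dots> = s\<^sup>2"
    using integral_normal_moment_even[of s 0 1] s by (simp add: power2_eq_square)
  finally show ?thesis using I s by simp
qed

lemma lin_sym:
  fixes g :: "real \<Rightarrow> real"
  assumes "\<exists>k. m k \<noteq> 0" and g: "g \<in> borel_measurable borel"
  shows "(\<integral>z. g (lin m z) \<partial>(ZZ :: ('n::finite \<Rightarrow> real) measure)) = (\<integral>z. g (- lin m z) \<partial>ZZ)"
proof -
  have m': "\<exists>k. - m k \<noteq> 0" using assms by auto
  have e: "(\<Sum>k\<in>UNIV. (- m k)\<^sup>2) = (\<Sum>k\<in>UNIV. (m k)\<^sup>2)" by simp
  have l: "lin (\<lambda>k. - m k) z = - lin m z" for z by (simp add: lin_def sum_negf)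
  have "(\<integral>z. g (lin m z) \<partial>(ZZ :: ('n::finite \<Rightarrow> real) measure)) =
      (\<integral>x. normal_density 0 (sqrt (\<Sum>k\<in>UNIV. (m k)\<^sup>2)) x * g x \<partial>lborel)"
    using distributed_integral[OF lin_distributed[OF assms(1)], of g] g by simp
  also have "\<dots> = (\<integral>z. g (lin (\<lambda>k. - m k) z) \<partial>(ZZ :: ('n::finite \<Rightarrow> real) measure))"
    using distributed_integral[OF lin_distributed[OF m'], of g] g by (simp only: e) simp
  finally show ?thesis by (simp add: l)
qed

lemma anti_conc:
  assumes "\<exists>k. m k \<noteq> 0" and a: "a > 0"
  shows "measure (ZZ :: ('n::finite \<Rightarrow> real) measure) {z. \<bar>lin m z\<bar> < a}
     \<le> 2 * a / sqrt (2 * pi * (\<Sum>k\<in>UNIV. (m k)\<^sup>2))"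
proof -
  interpret prob_space "ZZ :: ('n::finite \<Rightarrow> real) measure" by (rule ps_Z)
  define s where "s = sqrt (\<Sum>k\<in>UNIV. (m k)\<^sup>2)"
  define c where "c = 1 / sqrt (2 * pi * s\<^sup>2)"
  have D: "distributed (ZZ :: ('n::finite \<Rightarrow> real) measure) lborel (lin m) (normal_density 0 s)"
    unfolding s_def by (rule lin_distributed[OF assms(1)])
  have c0: "c \<ge> 0" by (simp add: c_def)
  have bnd: "normal_density 0 s x \<le> c" for x
  proof -
    have "exp (-(x - 0)\<^sup>2/ (2 * s\<^sup>2)) \<le> 1" by simp
    then show ?thesis unfolding normal_density_def c_def
      by (metis mult_left_mono mult.right_neutral real_sqrt_ge_zero zero_le_divide_1_iff zero_le_mult_iff pi_ge_zero zero_le_numeral zero_le_power2)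
  qed
  have "emeasure ZZ (lin m -` {-a<..<a} \<inter> space ZZ) = (\<integral>\<^sup>+x. ennreal (normal_density 0 s x) * indicator {-a<..<a} x \<partial>lborel)"
    by (rule distributed_emeasure[OF D]) simp
  also have "\<dots> \<le> (\<integral>\<^sup>+x. ennreal c * indicator {-a<..<a} x \<partial>lborel)"
    by (intro nn_integral_mono) (auto simp: indicator_def bnd ennreal_leI)
  also have "\<dots> = ennreal c * ennreal (2 * a)"
    using a by (simp add: nn_integral_cmult_indicator)
  finally have "emeasure ZZ {z. \<bar>lin m z\<bar> < a} \<le> ennreal (c * (2 * a))"
    using c0 a by (simp add: space_Z vimage_def abs_less_iff ennreal_mult' Int_def conj_commute minus_less_iff)
  then have "measure ZZ {z. \<bar>lin m z\<bar> < a} \<le> c * (2 * a)"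
    using c0 a by (simp add: emeasure_eq_measure ennreal_le_iff)
  moreover have "s\<^sup>2 = (\<Sum>k\<in>UNIV. (m k)\<^sup>2)" unfolding s_def by (simp add: sum_nonneg)
  ultimately show ?thesis by (simp add: c_def)
qed

lemma relu_eq: "relu_ab a b x = a * max x 0 + b * min x 0"
  by (simp add: relu_ab_def)

lemma relu_meas[measurable]: "relu_ab a b \<in> borel_measurable borel"
  unfolding relu_eq[abs_def] by measurable

lemma relu_sq: "(relu_ab a b x)\<^sup>2 = a\<^sup>2 * (max x 0)\<^sup>2 + b\<^sup>2 * (min x 0)\<^sup>2"
  by (simp add: relu_ab_def power2_eq_square)

lemma relu_sq_le: "(relu_ab a b x)\<^sup>2 \<le> (a\<^sup>2 + b\<^sup>2) * x\<^sup>2"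
  unfolding relu_sq by (cases "0 \<le> x") (auto simp: max_def min_def algebra_simps)

lemma relu_lin_sq:
  "integrable (ZZ :: ('n::finite \<Rightarrow> real) measure) (\<lambda>z. (relu_ab a b (lin m z))\<^sup>2) \<and>
   (\<integral>z. (relu_ab a b (lin m z))\<^sup>2 \<partial>(ZZ :: ('n::finite \<Rightarrow> real) measure))
      = (a\<^sup>2 + b\<^sup>2) / 2 * (\<Sum>k\<in>UNIV. (m k)\<^sup>2)"
proof -
  interpret prob_space "ZZ :: ('n::finite \<Rightarrow> real) measure" by (rule ps_Z)
  have L: "integrable ZZ (\<lambda>z. (lin m z)\<^sup>2)" "(\<integral>z. (lin m z)\<^sup>2 \<partial>ZZ) = (\<Sum>k\<in>UNIV. (m k)\<^sup>2)"
    using lin_sq[of m] by auto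
  have Ip: "integrable ZZ (\<lambda>z. (max (lin m z) 0)\<^sup>2)"
    by (rule Bochner_Integration.integrable_bound[OF L(1)]) (auto simp: max_def power2_eq_square)
  have In: "integrable ZZ (\<lambda>z. (min (lin m z) 0)\<^sup>2)"
    by (rule Bochner_Integration.integrable_bound[OF L(1)]) (auto simp: min_def power2_eq_square)
  have sumeq: "(max x 0)\<^sup>2 + (min x 0)\<^sup>2 = x\<^sup>2" for x :: real
    by (simp add: max_def min_def)
  have E: "(\<integral>z. (max (lin m z) 0)\<^sup>2 \<partial>ZZ) = (\<integral>z. (min (lin m z) 0)\<^sup>2 \<partial>ZZ)"
  proof (cases "\<exists>k. m k \<noteq> 0")
    case True
    have "(\<integral>z. (max (lin m z) 0)\<^sup>2 \<partial>ZZ) = (\<integral>z. (max (- lin m z) 0)\<^sup>2 \<partial>ZZ)"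
      by (rule lin_sym[OF True, of "\<lambda>x. (max x 0)\<^sup>2"]) measurable
    also have "\<dots> = (\<integral>z. (min (lin m z) 0)\<^sup>2 \<partial>ZZ)"
      by (intro Bochner_Integration.integral_cong refl) (simp add: max_def min_def)
    finally show ?thesis .
  next
    case False then show ?thesis by (simp add: lin_zero)
  qed
  have tot: "(\<integral>z. (max (lin m z) 0)\<^sup>2 \<partial>ZZ) + (\<integral>z. (min (lin m z) 0)\<^sup>2 \<partial>ZZ) = (\<Sum>k\<in>UNIV. (m k)\<^sup>2)"
    using L(2) Bochner_Integration.integral_add[OF Ip In] by (simp add: sumeq)
  have I: "integrable ZZ (\<lambda>z. (relu_ab a b (lin m z))\<^sup>2)"
    unfolding relu_sq using Ip In by auto
  have "(\<integral>z. (relu_ab a b (lin m z))\<^sup>2 \<partial>ZZ) =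
      a\<^sup>2 * (\<integral>z. (max (lin m z) 0)\<^sup>2 \<partial>ZZ) + b\<^sup>2 * (\<integral>z. (min (lin m z) 0)\<^sup>2 \<partial>ZZ)"
    unfolding relu_sq using Ip In by simp
  also have "\<dots> = (a\<^sup>2 + b\<^sup>2) / 2 * (\<Sum>k\<in>UNIV. (m k)\<^sup>2)"
  proof -
    define S where "S = (\<Sum>k\<in>UNIV. (m k)\<^sup>2)"
    define E1 where "E1 = (\<integral>z. (max (lin m z) 0)\<^sup>2 \<partial>ZZ)"
    define E2 where "E2 = (\<integral>z. (min (lin m z) 0)\<^sup>2 \<partial>ZZ)"
    have e: "E1 = S / 2" "E2 = S / 2" using E tot unfolding S_def E1_def E2_def by linarith+
    show ?thesis unfolding S_def[symmetric] E1_def[symmetric] E2_def[symmetric]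
      by (simp only: e) (simp add: algebra_simps)
  qed
  finally show ?thesis using I by simp
qed


definition psd :: "('n::finite \<Rightarrow> 'n \<Rightarrow> real) \<Rightarrow> bool" where
  "psd S \<longleftrightarrow> (\<forall>i j. S i j = S j i) \<and> (\<forall>v. qf UNIV S v \<ge> 0)"

definition hmap :: "('n::finite \<Rightarrow> 'n \<Rightarrow> real) \<Rightarrow> ('n \<Rightarrow> real) \<Rightarrow> 'n \<Rightarrow> real" where
  "hmap S z = (\<lambda>i. lin (sqrt_factor S i) z)"

lemma hmap_meas[measurable]: "hmap S \<in> measurable ZZ (PiM UNIV (\<lambda>_. borel))"
  unfolding meas_Z_cong hmap_def
  apply (rule measurable_PiM_single')
  subgoal by (rule lin_meas)
  subgoal by (auto simp: space_PiM)
  done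

lemma mvn_eq: "mvnormal S = distr ZZ (PiM UNIV (\<lambda>_. borel)) (hmap S)"
  unfolding mvnormal_def ZZ_def hmap_def lin_def ..

lemma sets_mvn[measurable_cong]: "sets (mvnormal S) = sets (PiM UNIV (\<lambda>_. borel))"
  unfolding mvn_eq by simp

lemma space_mvn: "space (mvnormal S) = space (PiM UNIV (\<lambda>_. borel::real measure))"
  unfolding mvn_eq by simp

lemma ps_mvn: "prob_space (mvnormal (S::'n::finite \<Rightarrow> 'n \<Rightarrow> real))"
  unfolding mvn_eq by (rule prob_space.prob_space_distr[OF ps_Z hmap_meas])

lemma int_mvn:
  fixes g :: "('n::finite \<Rightarrow> real) \<Rightarrow> real"
  assumes "g \<in> borel_measurable (PiM UNIV (\<lambda>_. borel))"
  shows "integral\<^sup>L (mvnormal S) g = (\<integral>z. g (hmap S z) \<partial>ZZ)"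
  unfolding mvn_eq using assms by (rule integral_distr[OF hmap_meas])

lemma int_mvn':
  fixes g :: "('n::finite \<Rightarrow> real) \<Rightarrow> real"
  assumes "g \<in> borel_measurable (PiM UNIV (\<lambda>_. borel))"
  shows "integrable (mvnormal S) g \<longleftrightarrow> integrable ZZ (\<lambda>z. g (hmap S z))"
  unfolding mvn_eq using assms by (rule integrable_distr_eq[OF hmap_meas])

lemma psd_MM:
  assumes "psd S"
  shows "(\<Sum>k\<in>UNIV. sqrt_factor S i k * sqrt_factor S j k) = S i j"
proof -
  have "mmul (sqrt_factor S) (mtrans (sqrt_factor S)) = S"
    using assms unfolding psd_def by (intro sqrt_factor_ok) auto
  then have "mmul (sqrt_factor S) (mtrans (sqrt_factor S)) i j = S i j" by simp
  then show ?thesis by (simp add: mmul_def mtrans_def)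
qed

lemma mvn_sq:
  assumes "psd S"
  shows "integrable (mvnormal S) (\<lambda>h. (h i)\<^sup>2) \<and> (\<integral>h. (h i)\<^sup>2 \<partial>mvnormal S) = S i i"
proof -
  have "integrable ZZ (\<lambda>z. (hmap S z i)\<^sup>2) \<and> (\<integral>z. (hmap S z i)\<^sup>2 \<partial>ZZ) = S i i"
    using lin_sq[of "sqrt_factor S i"] psd_MM[OF assms, of i i]
    by (simp add: hmap_def power2_eq_square)
  then show ?thesis by (simp add: int_mvn int_mvn')
qed

lemma mvn_prod:
  assumes "psd S"
  shows "integrable (mvnormal S) (\<lambda>h. h i * h j) \<and> (\<integral>h. h i * h j \<partial>mvnormal S) = S i j"
proof -
  define a where "a = (\<lambda>k. sqrt_factor S i k + sqrt_factor S j k)"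
  define b where "b = (\<lambda>k. sqrt_factor S i k - sqrt_factor S j k)"
  have pt: "hmap S z i * hmap S z j = ((lin a z)\<^sup>2 - (lin b z)\<^sup>2) / 4" for z
    by (simp add: hmap_def lin_def a_def b_def sum.distrib sum_subtractf algebra_simps power2_eq_square)
  have A: "integrable ZZ (\<lambda>z. (lin a z)\<^sup>2)" "(\<integral>z. (lin a z)\<^sup>2 \<partial>ZZ) = (\<Sum>k\<in>UNIV. (a k)\<^sup>2)"
    using lin_sq[of a] by auto
  have B: "integrable ZZ (\<lambda>z. (lin b z)\<^sup>2)" "(\<integral>z. (lin b z)\<^sup>2 \<partial>ZZ) = (\<Sum>k\<in>UNIV. (b k)\<^sup>2)"
    using lin_sq[of b] by auto
  have I: "integrable ZZ (\<lambda>z. hmap S z i * hmap S z j)"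
    unfolding pt using A B by auto
  have "(\<integral>z. hmap S z i * hmap S z j \<partial>ZZ) = ((\<Sum>k\<in>UNIV. (a k)\<^sup>2) - (\<Sum>k\<in>UNIV. (b k)\<^sup>2)) / 4"
    unfolding pt using A B by simp
  also have "\<dots> = (\<Sum>k\<in>UNIV. sqrt_factor S i k * sqrt_factor S j k)"
    by (simp add: a_def b_def sum_subtractf[symmetric] power2_eq_square algebra_simps sum_divide_distrib)
  also have "\<dots> = S i j" by (rule psd_MM[OF assms])
  finally show ?thesis using I by (simp add: int_mvn int_mvn')
qed

lemma mvn_relu_sq:
  assumes "psd S"
  shows "integrable (mvnormal S) (\<lambda>h. (relu_ab a b (h i))\<^sup>2) \<and>
     (\<integral>h. (relu_ab a b (h i))\<^sup>2 \<partial>mvnormal S) = (a\<^sup>2 + b\<^sup>2) / 2 * S i i"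
proof -
  have "integrable ZZ (\<lambda>z. (relu_ab a b (hmap S z i))\<^sup>2) \<and>
      (\<integral>z. (relu_ab a b (hmap S z i))\<^sup>2 \<partial>ZZ) = (a\<^sup>2 + b\<^sup>2) / 2 * S i i"
    using relu_lin_sq[of a b "sqrt_factor S i"] psd_MM[OF assms, of i i]
    by (simp add: hmap_def power2_eq_square)
  then show ?thesis by (simp add: int_mvn int_mvn')
qed

lemma abs_prod_le: "\<bar>x * y\<bar> \<le> x\<^sup>2 + (y::real)\<^sup>2"
proof -
  have "0 \<le> (\<bar>x\<bar> - \<bar>y\<bar>)\<^sup>2" by simp
  then have "2 * (\<bar>x\<bar> * \<bar>y\<bar>) \<le> x\<^sup>2 + y\<^sup>2" by (simp add: power2_diff power2_abs)
  moreover have "0 \<le> \<bar>x\<bar> * \<bar>y\<bar>" by simp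
  ultimately have "\<bar>x\<bar> * \<bar>y\<bar> \<le> x\<^sup>2 + y\<^sup>2" by linarith
  then show ?thesis by (simp add: abs_mult)
qed

lemma mvn_relu_prod:
  assumes "psd S"
  shows "integrable (mvnormal S) (\<lambda>h. relu_ab a b (h i) * relu_ab a b (h j))"
proof (rule Bochner_Integration.integrable_bound)
  show "integrable (mvnormal S) (\<lambda>h. (relu_ab a b (h i))\<^sup>2 + (relu_ab a b (h j))\<^sup>2)"
    using mvn_relu_sq[OF assms, of a b i] mvn_relu_sq[OF assms, of a b j] by auto
  show "(\<lambda>h. relu_ab a b (h i) * relu_ab a b (h j)) \<in> borel_measurable (mvnormal S)"
    by measurable
  show "AE h in mvnormal S. norm (relu_ab a b (h i) * relu_ab a b (h j))
          \<le> norm ((relu_ab a b (h i))\<^sup>2 + (relu_ab a b (h j))\<^sup>2)"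
  proof (rule AE_I2)
    fix h :: "'a \<Rightarrow> real"
    have "\<bar>relu_ab a b (h i) * relu_ab a b (h j)\<bar> \<le> (relu_ab a b (h i))\<^sup>2 + (relu_ab a b (h j))\<^sup>2"
      by (rule abs_prod_le)
    then show "norm (relu_ab a b (h i) * relu_ab a b (h j))
          \<le> norm ((relu_ab a b (h i))\<^sup>2 + (relu_ab a b (h j))\<^sup>2)" by simp
  qed
qed


lemma Gmat_sym: "Gmat s S i j = Gmat s S j i"
  unfolding Gmat_def by (simp add: mult.commute)

lemma relu_prod_meas[measurable]:
  "(\<lambda>h. relu_ab a b (h l) * relu_ab a b (h k)) \<in> borel_measurable (PiM UNIV (\<lambda>_. borel))"
  by measurable

lemma int_sum4:
  fixes f :: "'i \<Rightarrow> 'j \<Rightarrow> 'l \<Rightarrow> 'k \<Rightarrow> 'a \<Rightarrow> real"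
  assumes "\<And>i j l k. integrable M (f i j l k)"
  shows "(\<integral>x. (\<Sum>i\<in>I. \<Sum>j\<in>J. \<Sum>l\<in>K. \<Sum>k\<in>L. f i j l k x) \<partial>M)
       = (\<Sum>i\<in>I. \<Sum>j\<in>J. \<Sum>l\<in>K. \<Sum>k\<in>L. integral\<^sup>L M (f i j l k))"
proof -
  have i3: "integrable M (\<lambda>x. \<Sum>k\<in>L. f i j l k x)" for i j l
    by (rule Bochner_Integration.integrable_sum) (rule assms)
  have i2: "integrable M (\<lambda>x. \<Sum>l\<in>K. \<Sum>k\<in>L. f i j l k x)" for i j
    by (rule Bochner_Integration.integrable_sum) (rule i3)
  have i1: "integrable M (\<lambda>x. \<Sum>j\<in>J. \<Sum>l\<in>K. \<Sum>k\<in>L. f i j l k x)" for i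
    by (rule Bochner_Integration.integrable_sum) (rule i2)
  show ?thesis
    by (simp add: Bochner_Integration.integral_sum[OF i1] Bochner_Integration.integral_sum[OF i2]
        Bochner_Integration.integral_sum[OF i3] Bochner_Integration.integral_sum[OF assms])
qed

lemma KEY:
  assumes adj: "is_adj A" and S: "psd S"
  shows "(\<Sum>i\<in>UNIV. \<Sum>j\<in>UNIV. B i j * mmul (mmul (A_hat A) (Gmat (relu_ab a b) S)) (A_hat A) i j)
    = (\<integral>h. (\<Sum>i\<in>UNIV. \<Sum>j\<in>UNIV. B i j * mv (A_hat A) (\<lambda>p. relu_ab a b (h p)) i
                  * mv (A_hat A) (\<lambda>p. relu_ab a b (h p)) j) \<partial>mvnormal S)"
    (is "?L = ?R")
proof -
  let ?s = "relu_ab a b"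
  let ?Ah = "A_hat A"
  have intI: "integrable (mvnormal S) (\<lambda>h. c * (?s (h l) * ?s (h k)))" for c l k
    using mvn_relu_prod[OF S, of a b l k] by simp
  have pt: "(\<Sum>i\<in>UNIV. \<Sum>j\<in>UNIV. B i j * mv ?Ah (\<lambda>p. ?s (h p)) i * mv ?Ah (\<lambda>p. ?s (h p)) j)
      = (\<Sum>i\<in>UNIV. \<Sum>j\<in>UNIV. \<Sum>l\<in>UNIV. \<Sum>k\<in>UNIV. (B i j * ?Ah i l * ?Ah j k) * (?s (h l) * ?s (h k)))" for h
    by (simp add: mv_def sum_distrib_left sum_distrib_right mult_ac)
  have "?R = (\<Sum>i\<in>UNIV. \<Sum>j\<in>UNIV. \<Sum>l\<in>UNIV. \<Sum>k\<in>UNIV. (B i j * ?Ah i l * ?Ah j k) *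
        (\<integral>h. ?s (h l) * ?s (h k) \<partial>mvnormal S))"
    unfolding pt by (subst int_sum4[OF intI]) simp
  also have "\<dots> = ?L"
  proof -
    have inner: "mmul (mmul ?Ah (Gmat ?s S)) ?Ah i j = (\<Sum>l\<in>UNIV. \<Sum>k\<in>UNIV. ?Ah i l * ?Ah j k * Gmat ?s S l k)" for i j
    proof -
      have "mmul (mmul ?Ah (Gmat ?s S)) ?Ah i j = (\<Sum>k\<in>UNIV. \<Sum>l\<in>UNIV. ?Ah i l * Gmat ?s S l k * ?Ah k j)"
        by (simp add: mmul_def sum_distrib_right)
      also have "\<dots> = (\<Sum>l\<in>UNIV. \<Sum>k\<in>UNIV. ?Ah i l * Gmat ?s S l k * ?Ah k j)" by (rule sum.swap)
      also have "\<dots> = (\<Sum>l\<in>UNIV. \<Sum>k\<in>UNIV. ?Ah i l * ?Ah j k * Gmat ?s S l k)"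
        by (intro sum.cong refl) (simp add: Ahatl_sym[OF adj, of k j for k] mult_ac)
      finally show ?thesis .
    qed
    show ?thesis unfolding inner by (simp add: Gmat_def sum_distrib_left mult_ac)
  qed
  finally show ?thesis by simp
qed


lemma KEYI:
  assumes S: "psd S"
  shows "integrable (mvnormal S) (\<lambda>h. (\<Sum>i\<in>UNIV. \<Sum>j\<in>UNIV. B i j * mv (A_hat A) (\<lambda>p. relu_ab a b (h p)) i
                  * mv (A_hat A) (\<lambda>p. relu_ab a b (h p)) j))"
proof -
  let ?s = "relu_ab a b"
  let ?Ah = "A_hat A"
  have intI: "integrable (mvnormal S) (\<lambda>h. c * (?s (h l) * ?s (h k)))" for c l k
    using mvn_relu_prod[OF S, of a b l k] by simp
  have pt: "(\<Sum>i\<in>UNIV. \<Sum>j\<in>UNIV. B i j * mv ?Ah (\<lambda>p. ?s (h p)) i * mv ?Ah (\<lambda>p. ?s (h p)) j)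
      = (\<Sum>i\<in>UNIV. \<Sum>j\<in>UNIV. \<Sum>l\<in>UNIV. \<Sum>k\<in>UNIV. (B i j * ?Ah i l * ?Ah j k) * (?s (h l) * ?s (h k)))" for h
    by (simp add: mv_def sum_distrib_left sum_distrib_right mult_ac)
  show ?thesis unfolding pt
    by (intro Bochner_Integration.integrable_sum intI)
qed

lemma delta_sum:
  fixes f :: "'n::finite \<Rightarrow> real"
  shows "(\<Sum>j\<in>UNIV. (if i = j then 1 else 0) * f j) = f i"
proof -
  have "(\<Sum>j\<in>UNIV. (if i = j then 1 else 0) * f j) = (\<Sum>j\<in>UNIV. if i = j then f j else 0)"
    by (rule sum.cong) auto
  then show ?thesis by simp
qed

lemma ipv_as_B: "ipv u w = (\<Sum>i\<in>UNIV. \<Sum>j\<in>UNIV. (if i = j then 1 else 0) * u i * w j)"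
proof -
  have "(\<Sum>j\<in>UNIV. (if i = j then 1 else 0) * u i * w j) = u i * w i" for i
    using delta_sum[of i "\<lambda>j. u i * w j"] by (simp add: mult_ac)
  then show ?thesis by (simp add: ipv_def)
qed

lemma ipv_pv_as_B:
  assumes "is_adj A"
  shows "ipv u (pv A u) = (\<Sum>i\<in>UNIV. \<Sum>j\<in>UNIV. L_hat A i j * u i * u j)"
proof -
  have "(\<Sum>i\<in>UNIV. \<Sum>j\<in>UNIV. L_hat A i j * u i * u j) =
     (\<Sum>i\<in>UNIV. \<Sum>j\<in>UNIV. (if i = j then 1 else 0) * u i * u j) - (\<Sum>i\<in>UNIV. \<Sum>j\<in>UNIV. A_hat A i j * u i * u j)"
    by (simp add: L_hat_def algebra_simps sum_subtractf)
  also have "\<dots> = ipv u u - ipv u (mv (A_hat A) u)"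
  proof -
    have "(\<Sum>i\<in>UNIV. \<Sum>j\<in>UNIV. (if i = j then 1 else 0) * u i * u j) = ipv u u"
      by (rule ipv_as_B[symmetric])
    moreover have "(\<Sum>i\<in>UNIV. \<Sum>j\<in>UNIV. A_hat A i j * u i * u j) = ipv u (mv (A_hat A) u)"
      by (simp add: ipv_def mv_def sum_distrib_left mult_ac)
    ultimately show ?thesis by simp
  qed
  also have "\<dots> = ipv u (pv A u)"
    using assms by (simp add: pv_def ipv_diff_right)
  finally show ?thesis by simp
qed

lemma sq_as_B: "(ipv v u)\<^sup>2 = (\<Sum>i\<in>UNIV. \<Sum>j\<in>UNIV. (v i * v j) * u i * u j)"
  by (simp add: ipv_def power2_eq_square sum_product mult_ac)

lemma trace_as_B:
  fixes X :: "'n::finite \<Rightarrow> 'n \<Rightarrow> real"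
  shows "(\<Sum>i\<in>UNIV. X i i) = (\<Sum>i\<in>UNIV. \<Sum>j\<in>UNIV. (if i = j then 1 else 0) * X i j)"
  by (simp add: delta_sum[of _ "X _"])


definition tr :: "('n::finite \<Rightarrow> 'n \<Rightarrow> real) \<Rightarrow> real" where
  "tr S = (\<Sum>i\<in>UNIV. S i i)"

definition nxt :: "real \<Rightarrow> real \<Rightarrow> real \<Rightarrow> ('n::finite \<Rightarrow> 'n \<Rightarrow> real) \<Rightarrow> ('n \<Rightarrow> 'n \<Rightarrow> real) \<Rightarrow> 'n \<Rightarrow> 'n \<Rightarrow> real" where
  "nxt a b sw A S = (\<lambda>i j. sw * mmul (mmul (A_hat A) (Gmat (relu_ab a b) S)) (A_hat A) i j)"

definition sv :: "real \<Rightarrow> real \<Rightarrow> ('n::finite \<Rightarrow> real) \<Rightarrow> 'n \<Rightarrow> real" where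
  "sv a b h = (\<lambda>p. relu_ab a b (h p))"

lemma cov_Suc_Suc: "cov (relu_ab a b) sw A X (Suc (Suc l)) = nxt a b sw A (cov (relu_ab a b) sw A X (Suc l))"
  by (simp add: nxt_def)

lemma int_ipv_s:
  assumes S: "psd S"
  shows "integrable (mvnormal S) (\<lambda>h. ipv (sv a b h) (sv a b h)) \<and>
         (\<integral>h. ipv (sv a b h) (sv a b h) \<partial>mvnormal S) = (a\<^sup>2 + b\<^sup>2) / 2 * tr S"
proof -
  have I: "integrable (mvnormal S) (\<lambda>h. (relu_ab a b (h i))\<^sup>2)" for i using mvn_relu_sq[OF S] by blast
  have e: "ipv (sv a b h) (sv a b h) = (\<Sum>i\<in>UNIV. (relu_ab a b (h i))\<^sup>2)" for h
    by (simp add: ipv_def sv_def power2_eq_square)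
  have E: "(\<integral>h. (relu_ab a b (h i))\<^sup>2 \<partial>mvnormal S) = (a\<^sup>2 + b\<^sup>2) / 2 * S i i" for i
    using mvn_relu_sq[OF S] by blast
  show ?thesis unfolding e
    using I by (simp add: E Bochner_Integration.integral_sum Bochner_Integration.integrable_sum tr_def sum_distrib_left)
qed

context
  fixes A :: "'n::finite \<Rightarrow> 'n \<Rightarrow> real"
  assumes adj: "is_adj A"
begin

lemma nxt_B:
  assumes S: "psd S"
  shows "(\<Sum>i\<in>UNIV. \<Sum>j\<in>UNIV. B i j * nxt a b sw A S i j)
    = sw * (\<integral>h. (\<Sum>i\<in>UNIV. \<Sum>j\<in>UNIV. B i j * mv (A_hat A) (sv a b h) i
                  * mv (A_hat A) (sv a b h) j) \<partial>mvnormal S)"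
proof -
  have "(\<Sum>i\<in>UNIV. \<Sum>j\<in>UNIV. B i j * nxt a b sw A S i j) =
     sw * (\<Sum>i\<in>UNIV. \<Sum>j\<in>UNIV. B i j * mmul (mmul (A_hat A) (Gmat (relu_ab a b) S)) (A_hat A) i j)"
    by (simp add: nxt_def sum_distrib_left mult_ac)
  also have "\<dots> = sw * (\<integral>h. (\<Sum>i\<in>UNIV. \<Sum>j\<in>UNIV. B i j * mv (A_hat A) (sv a b h) i
                  * mv (A_hat A) (sv a b h) j) \<partial>mvnormal S)"
    using KEY[OF adj S, of B a b] by (simp add: sv_def)
  finally show ?thesis .
qed

lemma nxt_tr:
  assumes S: "psd S"
  shows "tr (nxt a b sw A S) = sw * (\<integral>h. ipv (mv (A_hat A) (sv a b h)) (mv (A_hat A) (sv a b h)) \<partial>mvnormal S)"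
  unfolding tr_def trace_as_B[of "nxt a b sw A S"] nxt_B[OF S] ipv_as_B ..

lemma int_ipv_As:
  assumes S: "psd S"
  shows "integrable (mvnormal S) (\<lambda>h. ipv (mv (A_hat A) (sv a b h)) (mv (A_hat A) (sv a b h)))"
  unfolding ipv_as_B sv_def by (rule KEYI[OF S])

lemma int_ipv_pv:
  assumes S: "psd S"
  shows "integrable (mvnormal S) (\<lambda>h. ipv (mv (A_hat A) (sv a b h)) (pv A (mv (A_hat A) (sv a b h))))"
  unfolding ipv_pv_as_B[OF adj] sv_def by (rule KEYI[OF S])

lemma nxt_tr_le:
  assumes S: "psd S" and sw: "sw \<ge> 0"
  shows "tr (nxt a b sw A S) \<le> sw * ((a\<^sup>2 + b\<^sup>2) / 2 * tr S)"
proof -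
  have "(\<integral>h. ipv (mv (A_hat A) (sv a b h)) (mv (A_hat A) (sv a b h)) \<partial>mvnormal S)
      \<le> (\<integral>h. ipv (sv a b h) (sv a b h) \<partial>mvnormal S)"
    using int_ipv_As[OF S] int_ipv_s[OF S] V1[OF adj]
    by (intro integral_mono) auto
  then have "(\<integral>h. ipv (mv (A_hat A) (sv a b h)) (mv (A_hat A) (sv a b h)) \<partial>mvnormal S)
      \<le> (a\<^sup>2 + b\<^sup>2) / 2 * tr S" using int_ipv_s[OF S, of a b] by simp
  then show ?thesis unfolding nxt_tr[OF S] using sw by (rule mult_left_mono)
qed

lemma nxt_dir:
  assumes S: "psd S" and sw: "sw \<ge> 0"
  shows "(\<Sum>i\<in>UNIV. \<Sum>j\<in>UNIV. L_hat A i j * nxt a b sw A S i j)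
     \<le> cc A * (sw * ((a\<^sup>2 + b\<^sup>2) / 2 * tr S) - tr (nxt a b sw A S))"
proof -
  define J where "J = (\<integral>h. ipv (mv (A_hat A) (sv a b h)) (pv A (mv (A_hat A) (sv a b h))) \<partial>mvnormal S)"
  define I where "I = (\<integral>h. ipv (mv (A_hat A) (sv a b h)) (mv (A_hat A) (sv a b h)) \<partial>mvnormal S)"
  have 1: "(\<Sum>i\<in>UNIV. \<Sum>j\<in>UNIV. L_hat A i j * nxt a b sw A S i j) = sw * J"
    unfolding J_def nxt_B[OF S] ipv_pv_as_B[OF adj] ..
  have i1: "integrable (mvnormal S) (\<lambda>h. ipv (sv a b h) (sv a b h))" using int_ipv_s[OF S] by blast
  have e1: "(\<integral>h. ipv (sv a b h) (sv a b h) \<partial>mvnormal S) = (a\<^sup>2 + b\<^sup>2) / 2 * tr S" using int_ipv_s[OF S] by blast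
  have 2: "J \<le> (\<integral>h. cc A * (ipv (sv a b h) (sv a b h) - ipv (mv (A_hat A) (sv a b h)) (mv (A_hat A) (sv a b h))) \<partial>mvnormal S)"
    unfolding J_def
  proof (rule integral_mono)
    show "integrable (mvnormal S) (\<lambda>h. ipv (mv (A_hat A) (sv a b h)) (pv A (mv (A_hat A) (sv a b h))))"
      by (rule int_ipv_pv[OF S])
    show "integrable (mvnormal S) (\<lambda>h. cc A * (ipv (sv a b h) (sv a b h) - ipv (mv (A_hat A) (sv a b h)) (mv (A_hat A) (sv a b h))))"
      by (intro Bochner_Integration.integrable_mult_right Bochner_Integration.integrable_diff i1 int_ipv_As[OF S])
    fix h show "ipv (mv (A_hat A) (sv a b h)) (pv A (mv (A_hat A) (sv a b h)))
       \<le> cc A * (ipv (sv a b h) (sv a b h) - ipv (mv (A_hat A) (sv a b h)) (mv (A_hat A) (sv a b h)))"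
      by (rule V2[OF adj])
  qed
  have 3: "(\<integral>h. cc A * (ipv (sv a b h) (sv a b h) - ipv (mv (A_hat A) (sv a b h)) (mv (A_hat A) (sv a b h))) \<partial>mvnormal S)
     = cc A * ((a\<^sup>2 + b\<^sup>2) / 2 * tr S - I)"
    unfolding I_def
    by (simp only: integral_mult_right_zero Bochner_Integration.integral_diff[OF i1 int_ipv_As[OF S]] e1)
  have 4: "tr (nxt a b sw A S) = sw * I" unfolding I_def by (rule nxt_tr[OF S])
  have "sw * J \<le> sw * (cc A * ((a\<^sup>2 + b\<^sup>2) / 2 * tr S - I))"
  proof -
    have "J \<le> cc A * ((a\<^sup>2 + b\<^sup>2) / 2 * tr S - I)" using 2 unfolding 3 .
    then show ?thesis using sw by (rule mult_left_mono)
  qed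
  then show ?thesis unfolding 1 4 by (simp add: algebra_simps)
qed

lemma mmul_inner:
  "mmul (mmul (A_hat A) G) (A_hat A) i j = (\<Sum>l\<in>UNIV. \<Sum>k\<in>UNIV. A_hat A i l * A_hat A j k * G l k)"
proof -
  have "mmul (mmul (A_hat A) G) (A_hat A) i j = (\<Sum>k\<in>UNIV. \<Sum>l\<in>UNIV. A_hat A i l * G l k * A_hat A k j)"
    by (simp add: mmul_def sum_distrib_right)
  also have "\<dots> = (\<Sum>l\<in>UNIV. \<Sum>k\<in>UNIV. A_hat A i l * G l k * A_hat A k j)" by (rule sum.swap)
  also have "\<dots> = (\<Sum>l\<in>UNIV. \<Sum>k\<in>UNIV. A_hat A i l * A_hat A j k * G l k)"
    by (intro sum.cong refl) (simp add: Ahatl_sym[OF adj, of k j for k] mult_ac)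
  finally show ?thesis .
qed

lemma mmul_sym:
  assumes "\<And>l k. G l k = G k l"
  shows "mmul (mmul (A_hat A) G) (A_hat A) i j = mmul (mmul (A_hat A) G) (A_hat A) j i"
  unfolding mmul_inner
  by (subst sum.swap) (simp add: assms mult_ac)

lemma nxt_psd:
  assumes S: "psd S" and sw: "sw \<ge> 0"
  shows "psd (nxt a b sw A S)"
  unfolding psd_def
proof (intro conjI allI)
  fix i j show "nxt a b sw A S i j = nxt a b sw A S j i"
    unfolding nxt_def by (subst mmul_sym) (auto intro: Gmat_sym)
next
  fix v
  have "qf UNIV (nxt a b sw A S) v = (\<Sum>i\<in>UNIV. \<Sum>j\<in>UNIV. (v i * v j) * nxt a b sw A S i j)"
    by (simp add: qf_def mult_ac)
  also have "\<dots> = sw * (\<integral>h. (ipv v (mv (A_hat A) (sv a b h)))\<^sup>2 \<partial>mvnormal S)"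
    unfolding nxt_B[OF S] sq_as_B ..
  also have "\<dots> \<ge> 0" using sw by simp
  finally show "qf UNIV (nxt a b sw A S) v \<ge> 0" .
qed

lemma cov1_eq:
  fixes X :: "'n \<Rightarrow> 'd::finite \<Rightarrow> real"
  shows "mmul (mmul (A_hat A) (mmul X (mtrans X))) (A_hat A) i j =
     (\<Sum>k\<in>UNIV. mv (A_hat A) (\<lambda>p. X p k) i * mv (A_hat A) (\<lambda>p. X p k) j)"
proof -
  have "mmul (mmul (A_hat A) (mmul X (mtrans X))) (A_hat A) i j
     = (\<Sum>l\<in>UNIV. \<Sum>q\<in>UNIV. A_hat A i l * A_hat A j q * (\<Sum>k\<in>UNIV. X l k * X q k))"
    unfolding mmul_inner by (simp add: mmul_def mtrans_def)
  also have "\<dots> = (\<Sum>l\<in>UNIV. \<Sum>q\<in>UNIV. \<Sum>k\<in>UNIV. (A_hat A i l * X l k) * (A_hat A j q * X q k))"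
    by (simp add: sum_distrib_left mult_ac)
  also have "\<dots> = (\<Sum>l\<in>UNIV. \<Sum>k\<in>UNIV. \<Sum>q\<in>UNIV. (A_hat A i l * X l k) * (A_hat A j q * X q k))"
    by (rule sum.cong[OF refl], rule sum.swap)
  also have "\<dots> = (\<Sum>k\<in>UNIV. \<Sum>l\<in>UNIV. \<Sum>q\<in>UNIV. (A_hat A i l * X l k) * (A_hat A j q * X q k))"
    by (rule sum.swap)
  also have "\<dots> = (\<Sum>k\<in>UNIV. mv (A_hat A) (\<lambda>p. X p k) i * mv (A_hat A) (\<lambda>p. X p k) j)"
    by (simp add: mv_def sum_product)
  finally show ?thesis .
qed

lemma cov1_psd:
  fixes X :: "'n \<Rightarrow> 'd::finite \<Rightarrow> real"
  assumes sw: "sw \<ge> 0"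
  shows "psd (cov (relu_ab a b) sw A X (Suc 0))"
  unfolding psd_def
proof (intro conjI allI)
  fix i j show "cov (relu_ab a b) sw A X (Suc 0) i j = cov (relu_ab a b) sw A X (Suc 0) j i"
    by (simp add: cov1_eq mult.commute)
next
  fix v
  have "qf UNIV (cov (relu_ab a b) sw A X (Suc 0)) v =
     (\<Sum>i\<in>UNIV. \<Sum>j\<in>UNIV. sw / real CARD('d) * (\<Sum>k\<in>UNIV. (v i * v j) * mv (A_hat A) (\<lambda>p. X p k) i * mv (A_hat A) (\<lambda>p. X p k) j))"
    by (simp add: qf_def cov1_eq sum_distrib_left mult_ac)
  also have "\<dots> = sw / real CARD('d) * (\<Sum>i\<in>UNIV. \<Sum>j\<in>UNIV. \<Sum>k\<in>UNIV. (v i * v j) * mv (A_hat A) (\<lambda>p. X p k) i * mv (A_hat A) (\<lambda>p. X p k) j)"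
    by (simp add: sum_distrib_left)
  also have "(\<Sum>i\<in>UNIV. \<Sum>j\<in>UNIV. \<Sum>k\<in>UNIV. (v i * v j) * mv (A_hat A) (\<lambda>p. X p k) i * mv (A_hat A) (\<lambda>p. X p k) j)
      = (\<Sum>k\<in>UNIV. \<Sum>i\<in>UNIV. \<Sum>j\<in>UNIV. (v i * v j) * mv (A_hat A) (\<lambda>p. X p k) i * mv (A_hat A) (\<lambda>p. X p k) j)"
    by (subst sum.swap, rule sum.cong[OF refl], rule sum.swap)
  also have "\<dots> = (\<Sum>k\<in>UNIV. (ipv v (mv (A_hat A) (\<lambda>p. X p k)))\<^sup>2)"
    by (simp only: sq_as_B)
  finally have e: "qf UNIV (cov (relu_ab a b) sw A X (Suc 0)) v = sw / real CARD('d) * (\<Sum>k\<in>UNIV. (ipv v (mv (A_hat A) (\<lambda>p. X p k)))\<^sup>2)" .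
  show "qf UNIV (cov (relu_ab a b) sw A X (Suc 0)) v \<ge> 0" unfolding e
    using sw by (intro mult_nonneg_nonneg sum_nonneg) auto
qed

lemma cov1_tr:
  fixes X :: "'n \<Rightarrow> 'd::finite \<Rightarrow> real"
  assumes sw: "sw \<ge> 0"
  shows "tr (cov (relu_ab a b) sw A X (Suc 0)) \<le> sw / real CARD('d) * frob2X X"
proof -
  have "tr (cov (relu_ab a b) sw A X (Suc 0)) =
     sw / real CARD('d) * (\<Sum>i\<in>UNIV. \<Sum>k\<in>UNIV. mv (A_hat A) (\<lambda>p. X p k) i * mv (A_hat A) (\<lambda>p. X p k) i)"
    by (simp add: tr_def cov1_eq sum_distrib_left)
  also have "(\<Sum>i\<in>UNIV. \<Sum>k\<in>UNIV. mv (A_hat A) (\<lambda>p. X p k) i * mv (A_hat A) (\<lambda>p. X p k) i)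
     = (\<Sum>k\<in>UNIV. ipv (mv (A_hat A) (\<lambda>p. X p k)) (mv (A_hat A) (\<lambda>p. X p k)))"
    unfolding ipv_def by (rule sum.swap)
  also have "sw / real CARD('d) * \<dots> \<le> sw / real CARD('d) * (\<Sum>k\<in>UNIV. ipv (\<lambda>p. X p k) (\<lambda>p. X p k))"
    using sw by (intro mult_left_mono sum_mono V1[OF adj]) auto
  also have "(\<Sum>k\<in>UNIV. ipv (\<lambda>p. X p k) (\<lambda>p. X p k)) = frob2X X"
    unfolding frob2X_def ipv_def power2_eq_square by (rule sum.swap)
  finally show ?thesis .
qed

lemma cov_psd:
  assumes sw: "sw \<ge> 0"
  shows "psd (cov (relu_ab a b) sw A X (Suc l))"
proof (induction l)
  case 0 show ?case by (rule cov1_psd[OF sw])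
next
  case (Suc l) then show ?case unfolding cov_Suc_Suc by (rule nxt_psd[OF _ sw])
qed

end


lemma ps_Hlaw: "prob_space (Hlaw C (S :: 'n::finite \<Rightarrow> 'n \<Rightarrow> real))"
  unfolding Hlaw_def by (rule prob_space_PiM) (rule ps_mvn)

lemma Hlaw_col_meas: "c < C \<Longrightarrow> (\<lambda>H. H c) \<in> measurable (Hlaw C S) (mvnormal S)"
  unfolding Hlaw_def by (rule measurable_component_singleton) simp

lemma Hlaw_distr: "c < C \<Longrightarrow> distr (Hlaw C S) (mvnormal S) (\<lambda>H. H c) = mvnormal (S :: 'n::finite \<Rightarrow> 'n \<Rightarrow> real)"
  unfolding Hlaw_def by (rule distr_PiM_component) (auto intro: ps_mvn)

lemma mvn_meas_cong: "g \<in> borel_measurable (PiM UNIV (\<lambda>_. borel)) \<Longrightarrow> g \<in> borel_measurable (mvnormal S)"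
  by (simp add: measurable_cong_sets[OF sets_mvn refl])

lemma Hlaw_int:
  fixes g :: "('n::finite \<Rightarrow> real) \<Rightarrow> real" and S :: "'n \<Rightarrow> 'n \<Rightarrow> real"
  assumes c: "c < C" and g: "g \<in> borel_measurable (PiM UNIV (\<lambda>_. borel))"
  shows "(\<integral>H. g (H c) \<partial>Hlaw C S) = integral\<^sup>L (mvnormal S) g"
    and "integrable (Hlaw C S) (\<lambda>H. g (H c)) \<longleftrightarrow> integrable (mvnormal S) g"
proof -
  have gm: "g \<in> borel_measurable (mvnormal S)" by (rule mvn_meas_cong[OF g])
  show "(\<integral>H. g (H c) \<partial>Hlaw C S) = integral\<^sup>L (mvnormal S) g"
    by (metis integral_distr[OF Hlaw_col_meas[OF c] gm] Hlaw_distr[OF c])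
  show "integrable (Hlaw C S) (\<lambda>H. g (H c)) \<longleftrightarrow> integrable (mvnormal S) g"
    by (metis integrable_distr_eq[OF Hlaw_col_meas[OF c] gm] Hlaw_distr[OF c])
qed

lemma Hlaw_entry_meas: "c < C \<Longrightarrow> (\<lambda>H. H c i) \<in> borel_measurable (Hlaw C S)"
  using measurable_comp[OF Hlaw_col_meas mvn_meas_cong[OF measurable_component_singleton[of i UNIV "\<lambda>_. borel"]]]
  by (simp add: o_def)

lemma frob2_meas: "frob2 C \<in> borel_measurable (Hlaw C S)"
proof -
  have "(\<lambda>H. \<Sum>c\<in>{..<C}. \<Sum>i\<in>UNIV. (H c i)\<^sup>2) \<in> borel_measurable (Hlaw C S)"
    by (intro borel_measurable_sum borel_measurable_power Hlaw_entry_meas) auto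
  then show ?thesis unfolding frob2_def[abs_def] .
qed

lemma dir_meas: "dirichlet A C \<in> borel_measurable (Hlaw C S)"
proof -
  have "(\<lambda>H. \<Sum>c\<in>{..<C}. \<Sum>i\<in>UNIV. \<Sum>j\<in>UNIV. H c i * L_hat A i j * H c j) \<in> borel_measurable (Hlaw C S)"
    by (intro borel_measurable_sum borel_measurable_times Hlaw_entry_meas borel_measurable_const) auto
  then show ?thesis unfolding dirichlet_def[abs_def] .
qed

lemma int_sum2:
  fixes f :: "'i \<Rightarrow> 'j \<Rightarrow> 'a \<Rightarrow> real"
  assumes "\<And>a b. a \<in> I \<Longrightarrow> b \<in> J \<Longrightarrow> integrable M (f a b)"
  shows "integrable M (\<lambda>x. \<Sum>a\<in>I. \<Sum>b\<in>J. f a b x) \<and>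
    (\<integral>x. (\<Sum>a\<in>I. \<Sum>b\<in>J. f a b x) \<partial>M) = (\<Sum>a\<in>I. \<Sum>b\<in>J. integral\<^sup>L M (f a b))"
proof -
  have i1: "integrable M (\<lambda>x. \<Sum>b\<in>J. f a b x)" if "a \<in> I" for a
    by (rule Bochner_Integration.integrable_sum) (rule assms[OF that])
  have "integrable M (\<lambda>x. \<Sum>a\<in>I. \<Sum>b\<in>J. f a b x)"
    by (rule Bochner_Integration.integrable_sum) (rule i1)
  moreover have "(\<integral>x. (\<Sum>a\<in>I. \<Sum>b\<in>J. f a b x) \<partial>M) = (\<Sum>a\<in>I. (\<integral>x. (\<Sum>b\<in>J. f a b x) \<partial>M))"
    by (rule Bochner_Integration.integral_sum) (rule i1)
  moreover have "(\<integral>x. (\<Sum>b\<in>J. f a b x) \<partial>M) = (\<Sum>b\<in>J. integral\<^sup>L M (f a b))" if "a \<in> I" for a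
    by (rule Bochner_Integration.integral_sum) (rule assms[OF that])
  ultimately show ?thesis by simp
qed

lemma int_sum3:
  fixes f :: "'i \<Rightarrow> 'j \<Rightarrow> 'k \<Rightarrow> 'a \<Rightarrow> real"
  assumes "\<And>a b c. a \<in> I \<Longrightarrow> b \<in> J \<Longrightarrow> c \<in> K \<Longrightarrow> integrable M (f a b c)"
  shows "integrable M (\<lambda>x. \<Sum>a\<in>I. \<Sum>b\<in>J. \<Sum>c\<in>K. f a b c x) \<and>
    (\<integral>x. (\<Sum>a\<in>I. \<Sum>b\<in>J. \<Sum>c\<in>K. f a b c x) \<partial>M) = (\<Sum>a\<in>I. \<Sum>b\<in>J. \<Sum>c\<in>K. integral\<^sup>L M (f a b c))"
proof -
  have i1: "integrable M (\<lambda>x. \<Sum>c\<in>K. f a b c x)" if "a \<in> I" "b \<in> J" for a b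
    by (rule Bochner_Integration.integrable_sum) (rule assms[OF that])
  have e1: "(\<integral>x. (\<Sum>c\<in>K. f a b c x) \<partial>M) = (\<Sum>c\<in>K. integral\<^sup>L M (f a b c))" if "a \<in> I" "b \<in> J" for a b
    by (rule Bochner_Integration.integral_sum) (rule assms[OF that])
  show ?thesis using int_sum2[of I J M "\<lambda>a b x. \<Sum>c\<in>K. f a b c x", OF i1] e1 by simp
qed

lemma E_frob:
  assumes S: "psd S"
  shows "integrable (Hlaw C S) (frob2 C) \<and> (\<integral>H. frob2 C H \<partial>Hlaw C S) = real C * tr S"
proof -
  have m: "(\<lambda>h. (h i)\<^sup>2) \<in> borel_measurable (PiM UNIV (\<lambda>_. borel::real measure))" for i :: 'a
    by measurable
  have I: "integrable (Hlaw C S) (\<lambda>H. (H c i)\<^sup>2)" if "c \<in> {..<C}" for c i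
    using Hlaw_int(2)[OF _ m, of c C S i] mvn_sq[OF S, of i] that by simp
  have E: "(\<integral>H. (H c i)\<^sup>2 \<partial>Hlaw C S) = S i i" if "c \<in> {..<C}" for c i
    using Hlaw_int(1)[OF _ m, of c C S i] mvn_sq[OF S, of i] that by simp
  have e: "frob2 C = (\<lambda>H. \<Sum>c\<in>{..<C}. \<Sum>i\<in>UNIV. (H c i)\<^sup>2)" by (simp add: frob2_def[abs_def])
  show ?thesis unfolding e using int_sum2[of "{..<C}" UNIV "Hlaw C S" "\<lambda>c i H. (H c i)\<^sup>2", OF I] E
    by (simp add: tr_def)
qed

lemma E_dir:
  assumes S: "psd S"
  shows "integrable (Hlaw C S) (dirichlet A C) \<and>
     (\<integral>H. dirichlet A C H \<partial>Hlaw C S) = real C * (\<Sum>i\<in>UNIV. \<Sum>j\<in>UNIV. L_hat A i j * S i j)"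
proof -
  have m: "(\<lambda>h. h i * h j) \<in> borel_measurable (PiM UNIV (\<lambda>_. borel::real measure))" for i j :: 'a
    by measurable
  have I: "integrable (Hlaw C S) (\<lambda>H. L_hat A i j * (H c i * H c j))" if "c \<in> {..<C}" for c i j
    using Hlaw_int(2)[OF _ m, of c C S i j] mvn_prod[OF S, of i j] that by simp
  have E: "(\<integral>H. H c i * H c j \<partial>Hlaw C S) = S i j" if "c \<in> {..<C}" for c i j
    using Hlaw_int(1)[OF _ m, of c C S i j] mvn_prod[OF S, of i j] that by simp
  have e: "dirichlet A C = (\<lambda>H. \<Sum>c\<in>{..<C}. \<Sum>i\<in>UNIV. \<Sum>j\<in>UNIV. L_hat A i j * (H c i * H c j))"
    by (simp add: dirichlet_def[abs_def] mult_ac)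
  note h = int_sum3[of "{..<C}" UNIV UNIV "Hlaw C S" "\<lambda>c i j H. L_hat A i j * (H c i * H c j)", OF I]
  have "(\<Sum>c<C. \<Sum>i\<in>UNIV. \<Sum>j\<in>UNIV. (\<integral>H. L_hat A i j * (H c i * H c j) \<partial>Hlaw C S))
       = (\<Sum>c<C. \<Sum>i\<in>UNIV. \<Sum>j\<in>UNIV. L_hat A i j * S i j)"
    by (intro sum.cong refl) (simp add: E)
  then show ?thesis using h unfolding e by (simp add: lessThan_def)
qed

lemma dir_as_ipv: "is_adj A \<Longrightarrow> dirichlet A C H = (\<Sum>c<C. ipv (H c) (pv A (H c)))"
  by (simp add: dirichlet_def ipv_pv_as_B mult_ac)

lemma frob2_as_ipv: "frob2 C H = (\<Sum>c<C. ipv (H c) (H c))"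
  by (simp add: frob2_def ipv_def power2_eq_square)

lemma dir_nonneg: "is_adj A \<Longrightarrow> dirichlet A C H \<ge> 0"
  by (simp add: dir_as_ipv sum_nonneg pv_nonneg)

lemma dir_le: "is_adj A \<Longrightarrow> dirichlet A C H \<le> 2 * frob2 C H"
proof -
  assume adj: "is_adj A"
  have "ipv (H c) (pv A (H c)) \<le> 2 * ipv (H c) (H c)" for c
  proof -
    have "ipv (H c) (pv A (H c)) \<le> (2 - del A) * ipv (H c) (H c)" by (rule pv_upper[OF adj])
    also have "\<dots> \<le> 2 * ipv (H c) (H c)" using del_pos[OF adj] ipv_self_nonneg[of "H c"]
      by (simp add: mult_right_mono)
    finally show ?thesis .
  qed
  then show ?thesis unfolding dir_as_ipv[OF adj] frob2_as_ipv sum_distrib_left by (rule sum_mono)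
qed

lemma frob2_nonneg: "frob2 C H \<ge> 0"
  by (simp add: frob2_def sum_nonneg)

lemma sq_lt_iff: "(x::real)\<^sup>2 < e \<longleftrightarrow> \<bar>x\<bar> < sqrt e"
proof -
  have "\<bar>x\<bar> < sqrt e \<longleftrightarrow> sqrt (x\<^sup>2) < sqrt e" by simp
  also have "\<dots> \<longleftrightarrow> x\<^sup>2 < e" by (rule real_sqrt_less_iff)
  finally show ?thesis by simp
qed

lemma anti_Hlaw:
  assumes S: "psd S" and C: "C \<ge> 1" and eps: "\<epsilon> > 0" and Sii: "S i i > 0"
  shows "measure (Hlaw C S) {H \<in> space (Hlaw C S). frob2 C H < \<epsilon>} \<le> 2 * sqrt \<epsilon> / sqrt (2 * pi * S i i)"
proof -
  interpret Hp: prob_space "Hlaw C S" by (rule ps_Hlaw)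
  interpret Zp: prob_space "ZZ :: ('a \<Rightarrow> real) measure" by (rule ps_Z)
  have c0: "0 < C" using C by simp
  define B where "B = {h :: 'a \<Rightarrow> real. (h i)\<^sup>2 < \<epsilon>}"
  have "B = {h \<in> space (PiM UNIV (\<lambda>_. borel)). (h i)\<^sup>2 < \<epsilon>}" by (auto simp: B_def space_PiM)
  also have "\<dots> \<in> sets (PiM UNIV (\<lambda>_. borel))" by measurable
  finally have Bm: "B \<in> sets (mvnormal S)" unfolding sets_mvn .
  have sub: "{H \<in> space (Hlaw C S). frob2 C H < \<epsilon>} \<subseteq> (\<lambda>H. H 0) -` B \<inter> space (Hlaw C S)"
  proof (intro subsetI)
    fix H assume H: "H \<in> {H \<in> space (Hlaw C S). frob2 C H < \<epsilon>}"
    have "(H 0 i)\<^sup>2 \<le> frob2 C H"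
    proof -
      have "(H 0 i)\<^sup>2 \<le> (\<Sum>j\<in>UNIV. (H 0 j)\<^sup>2)" by (rule member_le_sum) auto
      also have "\<dots> \<le> frob2 C H" unfolding frob2_def
        by (rule member_le_sum[of 0 "{..<C}" "\<lambda>c. \<Sum>j\<in>UNIV. (H c j)\<^sup>2"]) (use c0 in \<open>auto intro: sum_nonneg\<close>)
      finally show ?thesis .
    qed
    then show "H \<in> (\<lambda>H. H 0) -` B \<inter> space (Hlaw C S)" using H unfolding B_def by simp
  qed
  have "measure (Hlaw C S) {H \<in> space (Hlaw C S). frob2 C H < \<epsilon>} \<le> measure (Hlaw C S) ((\<lambda>H. H 0) -` B \<inter> space (Hlaw C S))"
    by (rule Hp.finite_measure_mono[OF sub]) (rule measurable_sets[OF Hlaw_col_meas[OF c0] Bm])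
  also have "\<dots> = measure (mvnormal S) B"
  proof -
    have d: "distr (Hlaw C S) (mvnormal S) (\<lambda>H. H 0) = mvnormal S" by (rule Hlaw_distr[OF c0])
    show ?thesis using measure_distr[OF Hlaw_col_meas[OF c0] Bm] unfolding d by simp
  qed
  also have "\<dots> = measure ZZ (hmap S -` B \<inter> space ZZ)"
    unfolding mvn_eq by (rule measure_distr[OF hmap_meas]) (use Bm in \<open>simp add: sets_mvn\<close>)
  also have "hmap S -` B \<inter> space ZZ = {z. \<bar>lin (sqrt_factor S i) z\<bar> < sqrt \<epsilon>}"
    by (auto simp: B_def hmap_def space_Z sq_lt_iff)
  also have "measure ZZ {z. \<bar>lin (sqrt_factor S i) z\<bar> < sqrt \<epsilon>} \<le>
       2 * sqrt \<epsilon> / sqrt (2 * pi * (\<Sum>k\<in>UNIV. (sqrt_factor S i k)\<^sup>2))"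
  proof -
    have ex: "\<exists>k. sqrt_factor S i k \<noteq> 0"
    proof (rule ccontr)
      assume "\<not> (\<exists>k. sqrt_factor S i k \<noteq> 0)"
      then have "(\<Sum>k\<in>UNIV. sqrt_factor S i k * sqrt_factor S i k) = 0" by simp
      then show False using psd_MM[OF S, of i i] Sii by simp
    qed
    show ?thesis by (rule anti_conc[OF ex]) (use eps in simp)
  qed
  also have "(\<Sum>k\<in>UNIV. (sqrt_factor S i k)\<^sup>2) = S i i"
    using psd_MM[OF S, of i i] by (simp add: power2_eq_square)
  finally show ?thesis .
qed


lemma GEV_bound:
  fixes S :: "'n::finite \<Rightarrow> 'n \<Rightarrow> real"
  assumes adj: "is_adj A" and S: "psd S" and eps: "\<epsilon> > 0"
  shows "(\<integral>H. dirichlet A C H / frob2 C H \<partial>Hlaw C S) \<le>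
           2 * measure (Hlaw C S) {H \<in> space (Hlaw C S). frob2 C H < \<epsilon>}
           + (\<integral>H. dirichlet A C H \<partial>Hlaw C S) / \<epsilon>"
    and "(\<integral>H. dirichlet A C H / frob2 C H \<partial>Hlaw C S) \<ge> 0"
proof -
  interpret Hp: prob_space "Hlaw C S" by (rule ps_Hlaw)
  define Aset where "Aset = {H \<in> space (Hlaw C S). frob2 C H < \<epsilon>}"
  have Am: "Aset \<in> sets (Hlaw C S)"
  proof -
    have "Aset = frob2 C -` {..<\<epsilon>} \<inter> space (Hlaw C S)" by (auto simp: Aset_def)
    also have "\<dots> \<in> sets (Hlaw C S)" by (rule measurable_sets[OF frob2_meas]) simp
    finally show ?thesis .
  qed
  have rm: "(\<lambda>H. dirichlet A C H / frob2 C H) \<in> borel_measurable (Hlaw C S)"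
    using dir_meas frob2_meas by (rule borel_measurable_divide)
  have bnd: "0 \<le> dirichlet A C H / frob2 C H \<and> dirichlet A C H / frob2 C H \<le> 2" for H
  proof (cases "frob2 C H = 0")
    case True then show ?thesis by simp
  next
    case False
    then have fp: "frob2 C H > 0" using frob2_nonneg[of C H] by simp
    show ?thesis using dir_nonneg[OF adj, of C H] dir_le[OF adj, of C H] fp
      by (simp add: divide_le_eq)
  qed
  have ri: "integrable (Hlaw C S) (\<lambda>H. dirichlet A C H / frob2 C H)"
  proof (rule Bochner_Integration.integrable_bound[where f="\<lambda>_. 2::real"])
    show "integrable (Hlaw C S) (\<lambda>_. 2::real)" by simp
    show "(\<lambda>H. dirichlet A C H / frob2 C H) \<in> borel_measurable (Hlaw C S)" by (rule rm)
    show "AE H in Hlaw C S. norm (dirichlet A C H / frob2 C H) \<le> norm (2::real)"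
    proof (rule AE_I2)
      fix H
      have a: "0 \<le> dirichlet A C H / frob2 C H" "dirichlet A C H / frob2 C H \<le> 2" using bnd[of H] by auto
      have "norm (dirichlet A C H / frob2 C H) = dirichlet A C H / frob2 C H"
        by (simp only: real_norm_def abs_of_nonneg[OF a(1)])
      then show "norm (dirichlet A C H / frob2 C H) \<le> norm (2::real)" using a(2) by simp
    qed
  qed
  have di: "integrable (Hlaw C S) (dirichlet A C)" using E_dir[OF S, of C A] by blast
  have ii: "integrable (Hlaw C S) (indicator Aset :: _ \<Rightarrow> real)"
    using Am by (intro integrable_real_indicator) (auto simp: Hp.emeasure_eq_measure)
  have "(\<integral>H. dirichlet A C H / frob2 C H \<partial>Hlaw C S) \<le>
      (\<integral>H. 2 * indicator Aset H + dirichlet A C H / \<epsilon> \<partial>Hlaw C S)"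
  proof (rule integral_mono[OF ri])
    show "integrable (Hlaw C S) (\<lambda>H. 2 * indicator Aset H + dirichlet A C H / \<epsilon>)"
      using ii di by auto
    fix H assume H: "H \<in> space (Hlaw C S)"
    show "dirichlet A C H / frob2 C H \<le> 2 * indicator Aset H + dirichlet A C H / \<epsilon>"
    proof (cases "H \<in> Aset")
      case True
      have "0 \<le> dirichlet A C H / \<epsilon>" using dir_nonneg[OF adj, of C H] eps by simp
      then show ?thesis using bnd[of H] True by simp
    next
      case False
      then have "frob2 C H \<ge> \<epsilon>" using H by (auto simp: Aset_def)
      then have "dirichlet A C H / frob2 C H \<le> dirichlet A C H / \<epsilon>"
        using dir_nonneg[OF adj, of C H] eps by (intro divide_left_mono) auto
      then show ?thesis using False by simp
    qed
  qed
  also have "\<dots> = 2 * measure (Hlaw C S) Aset + (\<integral>H. dirichlet A C H \<partial>Hlaw C S) / \<epsilon>"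
    using ii di Am by (simp add: Int_absorb2 sets.sets_into_space)
  finally show "(\<integral>H. dirichlet A C H / frob2 C H \<partial>Hlaw C S) \<le>
           2 * measure (Hlaw C S) {H \<in> space (Hlaw C S). frob2 C H < \<epsilon>}
           + (\<integral>H. dirichlet A C H \<partial>Hlaw C S) / \<epsilon>" unfolding Aset_def .
  show "(\<integral>H. dirichlet A C H / frob2 C H \<partial>Hlaw C S) \<ge> 0"
    using bnd by (intro Bochner_Integration.integral_nonneg) auto
qed

lemma psd_diag_nonneg:
  assumes "psd S" shows "S i i \<ge> 0"
proof -
  have "S i i = (\<integral>h. (h i)\<^sup>2 \<partial>mvnormal S)" using mvn_sq[OF assms, of i] by simp
  also have "\<dots> \<ge> 0" by (rule Bochner_Integration.integral_nonneg) simp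
  finally show ?thesis .
qed

lemma tr_nonneg: "psd S \<Longrightarrow> tr S \<ge> 0"
  unfolding tr_def by (intro sum_nonneg psd_diag_nonneg)

lemma diag_max:
  fixes S :: "'n::finite \<Rightarrow> 'n \<Rightarrow> real"
  shows "\<exists>i. tr S \<le> real CARD('n) * S i i"
proof -
  obtain i where i: "\<forall>j. S j j \<le> S i i"
  proof -
    have "finite (range (\<lambda>j. S j j))" "range (\<lambda>j. S j j) \<noteq> {}" by auto
    then have "Max (range (\<lambda>j. S j j)) \<in> range (\<lambda>j. S j j)" by (rule Max_in)
    then obtain i where "Max (range (\<lambda>j. S j j)) = S i i" unfolding image_iff by blast
    moreover have "S j j \<le> Max (range (\<lambda>j. S j j))" for j by (rule Max_ge) auto
    ultimately have "\<forall>j. S j j \<le> S i i" by simp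
    then show ?thesis using that by blast
  qed
  have "tr S \<le> (\<Sum>j\<in>(UNIV::'n set). S i i)" unfolding tr_def using i by (intro sum_mono) auto
  then show ?thesis by auto
qed


lemma frob2X_pos:
  fixes X :: "'n::finite \<Rightarrow> 'd::finite \<Rightarrow> real"
  assumes "\<exists>i k. X i k \<noteq> 0"
  shows "frob2X X > 0"
proof -
  obtain i k where ik: "X i k \<noteq> 0" using assms by blast
  have "0 < (X i k)\<^sup>2" using ik by simp
  also have "\<dots> \<le> (\<Sum>k'\<in>UNIV. (X i k')\<^sup>2)" by (rule member_le_sum) auto
  also have "\<dots> \<le> frob2X X" unfolding frob2X_def
    by (rule member_le_sum[of i UNIV "\<lambda>i. \<Sum>k\<in>UNIV. (X i k)\<^sup>2"]) (auto intro: sum_nonneg)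
  finally show ?thesis .
qed

theorem mainTheorem2:
  fixes \<alpha> \<beta> sw :: real and C :: nat
    and A :: "'n::finite \<Rightarrow> 'n \<Rightarrow> real" and X :: "'n \<Rightarrow> 'd::finite \<Rightarrow> real"
  assumes "\<alpha> \<ge> 0" and "\<beta> \<ge> 0" and "\<not> (\<alpha> = 0 \<and> \<beta> = 0)"
    and "is_adj A"
    and "\<exists>i k. X i k \<noteq> 0"
    and "C \<ge> 1"
    and "sw > 0"
  shows "(sw = 2 / (\<alpha>\<^sup>2 + \<beta>\<^sup>2) \<longrightarrow>
            ((\<lambda>L. GEV (relu_ab \<alpha> \<beta>) C A X L sw) \<longlonglongrightarrow> 0) \<or>
            ((\<lambda>L. FSP (relu_ab \<alpha> \<beta>) C A X L sw) \<longlonglongrightarrow> 0))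
       \<and> (sw < 2 / (\<alpha>\<^sup>2 + \<beta>\<^sup>2) \<longrightarrow>
            (\<forall>L\<ge>1. FSP (relu_ab \<alpha> \<beta>) C A X L sw
               \<le> 2 * real C / ((\<alpha>\<^sup>2 + \<beta>\<^sup>2) * real CARD('d)) * (sw * (\<alpha>\<^sup>2 + \<beta>\<^sup>2) / 2) ^ L))"
proof -
  note adj = assms(4)
  have sw0: "sw \<ge> 0" using assms(7) by simp
  have ab: "\<alpha>\<^sup>2 + \<beta>\<^sup>2 > 0" using assms(1-3)
    by (metis add_nonneg_pos add_pos_nonneg not_le order.not_eq_order_implies_strict zero_le_power2 zero_less_power2)
  define c0 where "c0 = (\<alpha>\<^sup>2 + \<beta>\<^sup>2) / 2"
  have c0: "c0 > 0" using ab by (simp add: c0_def)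
  define t where "t n = tr (cov (relu_ab \<alpha> \<beta>) sw A X (Suc n))" for n
  define fX where "fX = frob2X X"
  have fX: "fX > 0" unfolding fX_def by (rule frob2X_pos[OF assms(5)])
  have psdS: "psd (cov (relu_ab \<alpha> \<beta>) sw A X (Suc n))" for n by (rule cov_psd[OF adj sw0])
  have FSP_eq: "FSP (relu_ab \<alpha> \<beta>) C A X (Suc n) sw = real C * t n / fX" for n
  proof -
    have "FSP (relu_ab \<alpha> \<beta>) C A X (Suc n) sw
        = (\<integral>H. frob2 C H \<partial>Hlaw C (cov (relu_ab \<alpha> \<beta>) sw A X (Suc n))) / fX"
      unfolding FSP_def fX_def by (rule integral_divide_zero)
    then show ?thesis using E_frob[OF psdS[of n], of C] by (simp add: t_def)
  qed
  have tstep: "t (Suc n) \<le> sw * c0 * t n" for n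
    using nxt_tr_le[OF adj psdS[of n] sw0, of \<alpha> \<beta>]
    by (simp add: t_def nxt_def c0_def mult_ac)
  have t0: "t 0 \<le> sw / real CARD('d) * fX"
    using cov1_tr[OF adj sw0, of \<alpha> \<beta> X] by (simp add: t_def fX_def)
  have tnn: "t n \<ge> 0" for n unfolding t_def by (rule tr_nonneg[OF psdS])
  have part2: "\<forall>L\<ge>1. FSP (relu_ab \<alpha> \<beta>) C A X L sw
               \<le> 2 * real C / ((\<alpha>\<^sup>2 + \<beta>\<^sup>2) * real CARD('d)) * (sw * (\<alpha>\<^sup>2 + \<beta>\<^sup>2) / 2) ^ L"
  proof (intro allI impI)
    fix L :: nat assume "L \<ge> 1"
    then obtain n where L: "L = Suc n" by (cases L) auto
    have tb: "t n \<le> sw / real CARD('d) * fX * (sw * c0) ^ n"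
    proof (induction n)
      case 0 then show ?case using t0 by simp
    next
      case (Suc n)
      have "t (Suc n) \<le> sw * c0 * t n" by (rule tstep)
      also have "\<dots> \<le> sw * c0 * (sw / real CARD('d) * fX * (sw * c0) ^ n)"
        using Suc sw0 c0 by (intro mult_left_mono) auto
      finally show ?case by (simp add: mult_ac)
    qed
    have "FSP (relu_ab \<alpha> \<beta>) C A X L sw = real C * t n / fX" unfolding L by (rule FSP_eq)
    also have "\<dots> \<le> real C * (sw / real CARD('d) * fX * (sw * c0) ^ n) / fX"
      using tb fX by (intro divide_right_mono mult_left_mono) auto
    also have "\<dots> = real C * sw / real CARD('d) * (sw * c0) ^ n"
      using fX by simp
    also have "\<dots> = 2 * real C / ((2 * c0) * real CARD('d)) * (sw * (2 * c0) / 2) ^ L"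
      unfolding L using c0 by (simp add: field_simps)
    also have "2 * c0 = \<alpha>\<^sup>2 + \<beta>\<^sup>2" by (simp add: c0_def)
    finally show "FSP (relu_ab \<alpha> \<beta>) C A X L sw
       \<le> 2 * real C / ((\<alpha>\<^sup>2 + \<beta>\<^sup>2) * real CARD('d)) * (sw * (\<alpha>\<^sup>2 + \<beta>\<^sup>2) / 2) ^ L" .
  qed
  have part1: "((\<lambda>L. GEV (relu_ab \<alpha> \<beta>) C A X L sw) \<longlonglongrightarrow> 0) \<or>
            ((\<lambda>L. FSP (relu_ab \<alpha> \<beta>) C A X L sw) \<longlonglongrightarrow> 0)"
    if crit: "sw = 2 / (\<alpha>\<^sup>2 + \<beta>\<^sup>2)"
  proof -
    have swc: "sw * c0 = 1" using crit ab by (simp add: c0_def)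
    have dec: "decseq t" unfolding decseq_Suc_iff using tstep swc by simp
    obtain ts where ts: "t \<longlonglongrightarrow> ts" "\<forall>i. ts \<le> t i"
      using decseq_convergent[OF dec, of 0] tnn by blast
    have ts0: "ts \<ge> 0" by (rule tendsto_lowerbound[OF ts(1)]) (use tnn in auto)
    show ?thesis
    proof (cases "ts = 0")
      case True
      have "(\<lambda>n. real C * t n / fX) \<longlonglongrightarrow> real C * 0 / fX"
        using fX by (intro tendsto_intros ts(1)[unfolded True]) simp
      then have "(\<lambda>n. FSP (relu_ab \<alpha> \<beta>) C A X (Suc n) sw) \<longlonglongrightarrow> 0" by (simp add: FSP_eq)
      then have "(\<lambda>L. FSP (relu_ab \<alpha> \<beta>) C A X L sw) \<longlonglongrightarrow> 0" by (rule LIMSEQ_imp_Suc)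
      then show ?thesis by blast
    next
      case False
      then have tsp: "ts > 0" using ts0 by simp
      define N where "N = real CARD('n)"
      have Np: "N > 0" by (simp add: N_def)
      define q where "q = sqrt (2 * pi * (ts / N))"
      have qp: "q > 0" using tsp Np by (simp add: q_def)
      have diff: "(\<lambda>n. t n - t (Suc n)) \<longlonglongrightarrow> 0"
        using tendsto_diff[OF ts(1) LIMSEQ_Suc[OF ts(1)]] by simp
      have gb: "GEV (relu_ab \<alpha> \<beta>) C A X (Suc (Suc n)) sw \<le> 4 * sqrt \<epsilon> / q + real C * cc A * (t n - t (Suc n)) / \<epsilon>"
         and gnn: "GEV (relu_ab \<alpha> \<beta>) C A X (Suc (Suc n)) sw \<ge> 0"
        if eps: "\<epsilon> > 0" for \<epsilon> n
      proof -
        define S where "S = cov (relu_ab \<alpha> \<beta>) sw A X (Suc (Suc n))"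
        have S: "psd S" unfolding S_def by (rule psdS)
        have GEVe: "GEV (relu_ab \<alpha> \<beta>) C A X (Suc (Suc n)) sw = (\<integral>H. dirichlet A C H / frob2 C H \<partial>Hlaw C S)"
          by (simp add: GEV_def S_def)
        show "GEV (relu_ab \<alpha> \<beta>) C A X (Suc (Suc n)) sw \<ge> 0"
          unfolding GEVe by (rule GEV_bound(2)[OF adj S eps])
        have Edir: "(\<integral>H. dirichlet A C H \<partial>Hlaw C S) \<le> real C * cc A * (t n - t (Suc n))"
        proof -
          have e1: "(\<integral>H. dirichlet A C H \<partial>Hlaw C S) = real C * (\<Sum>i\<in>UNIV. \<Sum>j\<in>UNIV. L_hat A i j * S i j)"
            using E_dir[OF S, of C A] by simp
          have e2: "(\<Sum>i\<in>UNIV. \<Sum>j\<in>UNIV. L_hat A i j * S i j) \<le> cc A * (t n - t (Suc n))"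
          proof -
            have Snxt: "S = nxt \<alpha> \<beta> sw A (cov (relu_ab \<alpha> \<beta>) sw A X (Suc n))"
              unfolding S_def by (rule cov_Suc_Suc)
            have tS: "tr (nxt \<alpha> \<beta> sw A (cov (relu_ab \<alpha> \<beta>) sw A X (Suc n))) = t (Suc n)"
              unfolding t_def by (simp only: cov_Suc_Suc)
            have tn: "tr (cov (relu_ab \<alpha> \<beta>) sw A X (Suc n)) = t n" by (simp add: t_def)
            have k: "sw * ((\<alpha>\<^sup>2 + \<beta>\<^sup>2) / 2 * t n) = t n"
              using swc unfolding c0_def by (simp add: mult.assoc[symmetric])
            show ?thesis using nxt_dir[OF adj psdS[of n] sw0, of \<alpha> \<beta>] tS
              unfolding tn k Snxt[symmetric] by simp
          qed
          have "real C * (\<Sum>i\<in>UNIV. \<Sum>j\<in>UNIV. L_hat A i j * S i j) \<le> real C * (cc A * (t n - t (Suc n)))"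
            using e2 by (rule mult_left_mono) simp
          then show ?thesis unfolding e1 by (simp add: mult_ac)
        qed
        obtain i where i: "tr S \<le> real CARD('n) * S i i" using diag_max by blast
        have trS: "tr S = t (Suc n)" by (simp add: S_def t_def)
        have Sii: "S i i \<ge> ts / N" using i trS ts(2)[rule_format, of "Suc n"] Np
          by (simp add: N_def field_simps)
        have Siip: "S i i > 0" using Sii tsp Np by (meson divide_pos_pos less_le_trans)
        have P: "measure (Hlaw C S) {H \<in> space (Hlaw C S). frob2 C H < \<epsilon>} \<le> 2 * sqrt \<epsilon> / q"
        proof -
          have "measure (Hlaw C S) {H \<in> space (Hlaw C S). frob2 C H < \<epsilon>} \<le> 2 * sqrt \<epsilon> / sqrt (2 * pi * S i i)"
            by (rule anti_Hlaw[OF S assms(6) eps Siip])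
          also have "\<dots> \<le> 2 * sqrt \<epsilon> / q"
            unfolding q_def using Sii tsp Np eps Siip
            by (intro divide_left_mono mult_pos_pos real_sqrt_le_mono mult_left_mono) auto
          finally show ?thesis .
        qed
        have "GEV (relu_ab \<alpha> \<beta>) C A X (Suc (Suc n)) sw \<le>
            2 * measure (Hlaw C S) {H \<in> space (Hlaw C S). frob2 C H < \<epsilon>}
            + (\<integral>H. dirichlet A C H \<partial>Hlaw C S) / \<epsilon>"
          unfolding GEVe by (rule GEV_bound(1)[OF adj S eps])
        also have "\<dots> \<le> 2 * (2 * sqrt \<epsilon> / q) + real C * cc A * (t n - t (Suc n)) / \<epsilon>"
          using P Edir eps by (intro add_mono divide_right_mono mult_left_mono) auto
        finally show "GEV (relu_ab \<alpha> \<beta>) C A X (Suc (Suc n)) sw \<le> 4 * sqrt \<epsilon> / q + real C * cc A * (t n - t (Suc n)) / \<epsilon>"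
          by simp
      qed
      have "(\<lambda>n. GEV (relu_ab \<alpha> \<beta>) C A X (Suc (Suc n)) sw) \<longlonglongrightarrow> 0"
      proof (rule LIMSEQ_I)
        fix r :: real assume r: "r > 0"
        define \<epsilon> where "\<epsilon> = (r * q / 8)\<^sup>2"
        have eps: "\<epsilon> > 0" using r qp by (simp add: \<epsilon>_def)
        have se: "4 * sqrt \<epsilon> / q = r / 2" using r qp by (simp add: \<epsilon>_def)
        have "(\<lambda>n. real C * cc A * (t n - t (Suc n)) / \<epsilon>) \<longlonglongrightarrow> real C * cc A * 0 / \<epsilon>"
          using eps by (intro tendsto_intros diff) simp
        then have "\<forall>\<^sub>F n in sequentially. real C * cc A * (t n - t (Suc n)) / \<epsilon> < r / 2"
          using r by (intro order_tendstoD(2)) auto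
        then obtain no where no: "\<And>n. n \<ge> no \<Longrightarrow> real C * cc A * (t n - t (Suc n)) / \<epsilon> < r / 2"
          unfolding eventually_sequentially by blast
        show "\<exists>no. \<forall>n\<ge>no. norm (GEV (relu_ab \<alpha> \<beta>) C A X (Suc (Suc n)) sw - 0) < r"
        proof (intro exI allI impI)
          fix n assume "n \<ge> no"
          then have "GEV (relu_ab \<alpha> \<beta>) C A X (Suc (Suc n)) sw < r"
            using gb[OF eps, of n] no[of n] se by linarith
          then show "norm (GEV (relu_ab \<alpha> \<beta>) C A X (Suc (Suc n)) sw - 0) < r"
            using gnn[OF eps, of n] by simp
        qed
      qed
      then have "(\<lambda>n. GEV (relu_ab \<alpha> \<beta>) C A X (Suc n) sw) \<longlonglongrightarrow> 0"
        by (rule LIMSEQ_imp_Suc[where f="\<lambda>n. GEV (relu_ab \<alpha> \<beta>) C A X (Suc n) sw"])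
      then have "(\<lambda>L. GEV (relu_ab \<alpha> \<beta>) C A X L sw) \<longlonglongrightarrow> 0"
        by (rule LIMSEQ_imp_Suc)
      then show ?thesis by blast
    qed
  qed
  show ?thesis using part1 part2 by blast
qed


end
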